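(* Let $2\le p<3$, let $N\in\mathbb N$, $d,n\ge1$, and let $f=(f_1,\dots,f_d)$ with $f_\mu\colon\mathbb R^n\to\mathbb R^n$ of class $C^3_b$. Let $\mathbf w,\tilde{\mathbf w}$ be time series $(\mathbf w_0,\dots,\mathbf w_N)$, $(\tilde{\mathbf w}_0,\dots,\tilde{\mathbf w}_N)$ in $\mathbb R^d$ with lifts $\mathbf W=(\mathbf w,\mathbb W)$, $\tilde{\mathbf W}=(\tilde{\mathbf w},\tilde{\mathbb W})$, let $\xi,\tilde\xi\in\mathbb R^n$, and let $\mathbf x,\tilde{\mathbf x}$ solve \[ \mathbf x_{k+1}=\mathbf x_k+\sum_{\mu=1}^d f_\mu(\mathbf x_k)(\mathbf w^\mu_{k+1}-\mathbf w^\mu_k),\ \mathbf x_0=\xi,\qquad \tilde{\mathbf x}_{k+1}=\tilde{\mathbf x}_k+\sum_{\mu=1}^d f_\mu(\tilde{\mathbf x}_k)(\tilde{\mathbf w}^\mu_{k+1}-\tilde{\mathbf w}^\mu_k),\ \tilde{\mathbf x}_0=\tilde\xi . \] Then \[ \sup_{k=0,\dots,N}|\mathbf x_k-\tilde{\mathbf x}_k|\le 2c'_{p,N}\exp\!\Big(c_{p,N}\|f\|_{C^3_b}^p\big(|||\mathbf W|||^p_{p;[0,N]}+|||\tilde{\mathbf W}|||^p_{p;[0,N]}\big)\Big)\big(|\xi-\tilde\xi|+\|f\|_{C^3_b}\rho_p(\mathbf W,\tilde{\mathbf W})\big), \] where $c_{p,N}\coloneqq 2^pe^{2p}(L_p+K_p^2+K_p')^p$,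 $c'_{p,N}\coloneqq 2^{1-2/p}c_{p,N}^{1/p}$, $L_p\coloneqq 4^{3/2-2/p}\cdot7^{2-3/p}\cdot C_{p,N}$, $K_p\coloneqq 9\cdot 2^{6(1-1/p)}\big(1\vee 6^{1-1/p}8^{(1-1/p)(1-2/p)}C_{p,N}^{1-1/p}\big)$, $K_p'\coloneqq 3\cdot2^{1-2/p}(1+K_p^2)$, and $C_{p,N}\coloneqq 2^{2/p}\zeta_N(2/p)$ with $\zeta_N(s)=\sum_{j=1}^Nj^{-s}$.
   Context: $\mathbb R^n$ carries a fixed norm, $\mathbb R^d$ the $\ell^1$ norm, and $d\times d$ matrices the entrywise $\ell^1$ norm $|M|=\sum_{\mu,\nu}|M^{\mu\nu}|$; derivatives use induced operator norms. $\|f\|_{C^3_b}\coloneqq\max_{\mu}\max_{j=0,\dots,3}\|D^jf_\mu\|_\infty$. For $0\le k<l\le N$, $\mathcal S_{k,l}$ is the set of increasing integer sequences $s=(s_0=k<s_1<\dots<s_m<s_{m+1}=l)$, $\#s=m$. For a time series, $\|\mathbf w\|_{q;[k,l]}\coloneqq(\max_{s\in\mathcal S_{k,l}}\sum_{j=0}^{\#s}|\mathbf w_{s_{j+1}}-\mathbf w_{s_j}|^q)^{1/q}$; for a triangular array $(\Xi_{k,l})_{0\le k<l\le N}$, $\|\Xi\|_{q;[k,l]}\coloneqq(\max_{s\in\mathcal S_{k,l}}\sum_{j=0}^{\#s}|\Xi_{s_j,s_{j+1}}|^q)^{1/q}$. The lift of $\mathbf w$ is the array of $d\times d$ matrices $\mathbb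 W^{\mu\nu}_{k,l}\coloneqq\sum_{j=k}^{l-1}(\mathbf w^\mu_j-\mathbf w^\mu_k)(\mathbf w^\nu_{j+1}-\mathbf w^\nu_j)$, and $\mathbf W=(\mathbf w,\mathbb W)$. Define $|||\mathbf W|||_{p;[k,l]}\coloneqq\|\mathbf w\|_{p;[k,l]}+\|\mathbb W\|^{1/2}_{p/2;[k,l]}$ and $\rho_p(\mathbf W,\tilde{\mathbf W})\coloneqq\|\mathbf w-\tilde{\mathbf w}\|_{p;[0,N]}+\|\mathbb W-\tilde{\mathbb W}\|_{p/2;[0,N]}$. *)

theory Defs
  imports "HOL-Analysis.Analysis"
begin

text \<open>Vectors in R^d are functions nat => real restricted to indices mu < d, with the l1 norm.
  d x d matrices are functions nat => nat => real with the entrywise l1 norm.\<close>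

definition l1norm :: "nat \<Rightarrow> (nat \<Rightarrow> real) \<Rightarrow> real" where
  "l1norm d v = (\<Sum>\<mu><d. \<bar>v \<mu>\<bar>)"

definition mat_l1norm :: "nat \<Rightarrow> (nat \<Rightarrow> nat \<Rightarrow> real) \<Rightarrow> real" where
  "mat_l1norm d M = (\<Sum>\<mu><d. \<Sum>\<nu><d. \<bar>M \<mu> \<nu>\<bar>)"

definition partitions :: "nat \<Rightarrow> nat \<Rightarrow> nat list set" where
  "partitions k l = {s. sorted_wrt (<) s \<and> 2 \<le> length s \<and> hd s = k \<and> last s = l}"

definition pvar :: "real \<Rightarrow> (nat \<Rightarrow> nat \<Rightarrow> real) \<Rightarrow> nat \<Rightarrow> nat \<Rightarrow> real" where
  "pvar q A k l = (if k < l then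
      (Max ((\<lambda>s. \<Sum>j<length s - 1. (A (s ! j) (s ! Suc j)) powr q) ` partitions k l)) powr (1 / q)
    else 0)"

definition ts_pvar :: "nat \<Rightarrow> real \<Rightarrow> (nat \<Rightarrow> nat \<Rightarrow> real) \<Rightarrow> nat \<Rightarrow> nat \<Rightarrow> real" where
  "ts_pvar d q w k l = pvar q (\<lambda>a b. l1norm d (\<lambda>\<mu>. w b \<mu> - w a \<mu>)) k l"

definition arr_pvar :: "nat \<Rightarrow> real \<Rightarrow> (nat \<Rightarrow> nat \<Rightarrow> nat \<Rightarrow> nat \<Rightarrow> real) \<Rightarrow> nat \<Rightarrow> nat \<Rightarrow> real" where
  "arr_pvar d q X k l = pvar q (\<lambda>a b. mat_l1norm d (X a b)) k l"

definition lift :: "(nat \<Rightarrow> nat \<Rightarrow> real) \<Rightarrow> nat \<Rightarrow> nat \<Rightarrow> nat \<Rightarrow> nat \<Rightarrow> real" where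
  "lift w k l \<mu> \<nu> = (\<Sum>j\<in>{k..<l}. (w j \<mu> - w k \<mu>) * (w (Suc j) \<nu> - w j \<nu>))"

definition rp_norm :: "nat \<Rightarrow> real \<Rightarrow> (nat \<Rightarrow> nat \<Rightarrow> real) \<Rightarrow> nat \<Rightarrow> nat \<Rightarrow> real" where
  "rp_norm d p w k l = ts_pvar d p w k l + (arr_pvar d (p / 2) (lift w) k l) powr (1 / 2)"

definition rho_p :: "nat \<Rightarrow> real \<Rightarrow> nat \<Rightarrow> (nat \<Rightarrow> nat \<Rightarrow> real) \<Rightarrow> (nat \<Rightarrow> nat \<Rightarrow> real) \<Rightarrow> real" where
  "rho_p d p N w w' = ts_pvar d p (\<lambda>k \<mu>. w k \<mu> - w' k \<mu>) 0 N
      + arr_pvar d (p / 2) (\<lambda>k l \<mu> \<nu>. lift w k l \<mu> \<nu> - lift w' k l \<mu> \<nu>) 0 N"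

definition C3b_with ::
  "('a::real_normed_vector \<Rightarrow> 'a) \<Rightarrow> ('a \<Rightarrow> 'a \<Rightarrow>\<^sub>L 'a) \<Rightarrow> ('a \<Rightarrow> 'a \<Rightarrow>\<^sub>L ('a \<Rightarrow>\<^sub>L 'a))
    \<Rightarrow> ('a \<Rightarrow> 'a \<Rightarrow>\<^sub>L ('a \<Rightarrow>\<^sub>L ('a \<Rightarrow>\<^sub>L 'a))) \<Rightarrow> bool" where
  "C3b_with g D1 D2 D3 \<longleftrightarrow>
     (\<forall>x. (g has_derivative blinfun_apply (D1 x)) (at x)) \<and>
     (\<forall>x. (D1 has_derivative blinfun_apply (D2 x)) (at x)) \<and>
     (\<forall>x. (D2 has_derivative blinfun_apply (D3 x)) (at x)) \<and>
     continuous_on UNIV D3 \<and>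
     bounded (range g) \<and> bounded (range D1) \<and> bounded (range D2) \<and> bounded (range D3)"

definition C3b_norm ::
  "nat \<Rightarrow> (nat \<Rightarrow> 'a::real_normed_vector \<Rightarrow> 'a) \<Rightarrow> (nat \<Rightarrow> 'a \<Rightarrow> 'a \<Rightarrow>\<^sub>L 'a)
    \<Rightarrow> (nat \<Rightarrow> 'a \<Rightarrow> 'a \<Rightarrow>\<^sub>L ('a \<Rightarrow>\<^sub>L 'a))
    \<Rightarrow> (nat \<Rightarrow> 'a \<Rightarrow> 'a \<Rightarrow>\<^sub>L ('a \<Rightarrow>\<^sub>L ('a \<Rightarrow>\<^sub>L 'a))) \<Rightarrow> real" where
  "C3b_norm d f D1 D2 D3 = Max ((\<lambda>\<mu>. Max {(SUP x. norm (f \<mu> x)), (SUP x. norm (D1 \<mu> x)),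
                                          (SUP x. norm (D2 \<mu> x)), (SUP x. norm (D3 \<mu> x))}) ` {..<d})"

definition zetaN :: "nat \<Rightarrow> real \<Rightarrow> real" where
  "zetaN N s = (\<Sum>j=1..N. real j powr (- s))"

definition CpN :: "real \<Rightarrow> nat \<Rightarrow> real" where
  "CpN p N = 2 powr (2 / p) * zetaN N (2 / p)"

definition Lp :: "real \<Rightarrow> nat \<Rightarrow> real" where
  "Lp p N = 4 powr (3/2 - 2/p) * 7 powr (2 - 3/p) * CpN p N"

definition Kp :: "real \<Rightarrow> nat \<Rightarrow> real" where
  "Kp p N = 9 * 2 powr (6 * (1 - 1/p)) *
     max 1 (6 powr (1 - 1/p) * 8 powr ((1 - 1/p) * (1 - 2/p)) * CpN p N powr (1 - 1/p))"

definition Kp' :: "real \<Rightarrow> nat \<Rightarrow> real" where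
  "Kp' p N = 3 * 2 powr (1 - 2/p) * (1 + (Kp p N)\<^sup>2)"

definition cpN :: "real \<Rightarrow> nat \<Rightarrow> real" where
  "cpN p N = 2 powr p * exp (2 * p) * (Lp p N + (Kp p N)\<^sup>2 + Kp' p N) powr p"

definition cpN' :: "real \<Rightarrow> nat \<Rightarrow> real" where
  "cpN' p N = 2 powr (1 - 2/p) * cpN p N powr (1 / p)"

end

theory Submission
  imports Defs
begin


definition V :: "real \<Rightarrow> (nat \<Rightarrow> nat \<Rightarrow> real) \<Rightarrow> nat \<Rightarrow> nat \<Rightarrow> real" where
  "V q A k l = (if k < l then
      Max ((\<lambda>s. \<Sum>j<length s - 1. (A (s ! j) (s ! Suc j)) powr q) ` partitions k l) else 0)"

lemma pvar_V: "pvar q A k l = V q A k l powr (1 / q)"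
  by (simp add: pvar_def V_def)

fun psum :: "(nat \<Rightarrow> nat \<Rightarrow> real) \<Rightarrow> nat list \<Rightarrow> real" where
  "psum g (x # y # ys) = g x y + psum g (y # ys)"
| "psum g _ = 0"

lemma psum_eq: "(\<Sum>j<length s - 1. g (s ! j) (s ! Suc j)) = psum g s"
proof (induction g s rule: psum.induct)
  case (1 g x y ys)
  have "(\<Sum>j<length (x # y # ys) - 1. g ((x # y # ys) ! j) ((x # y # ys) ! Suc j))
      = (\<Sum>j<Suc (length (y # ys) - 1). g ((x # y # ys) ! j) ((x # y # ys) ! Suc j))" by simp
  also have "\<dots> = g x y + (\<Sum>j<length (y # ys) - 1. g ((y # ys) ! j) ((y # ys) ! Suc j))"
    by (subst sum.lessThan_Suc_shift) simp
  finally show ?case using 1 by simp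
qed auto

lemma psum_app: "s1 \<noteq> [] \<Longrightarrow> s2 \<noteq> [] \<Longrightarrow> last s1 = hd s2 \<Longrightarrow>
   psum g (s1 @ tl s2) = psum g s1 + psum g s2"
proof (induction s1)
  case Nil
  then show ?case by simp
next
  case (Cons x xs)
  show ?case
  proof (cases xs)
    case Nil
    then show ?thesis using Cons.prems by (cases s2) auto
  next
    case (Cons y ys)
    then show ?thesis using Cons.IH \<open>x # xs \<noteq> []\<close> Cons.prems by auto
  qed
qed

lemma sorted_bounds:
  fixes s :: "nat list"
  assumes "sorted_wrt (<) s" "s \<noteq> []" "z \<in> set s"
  shows "hd s \<le> z \<and> z \<le> last s"
proof
  obtain a t where s: "s = a # t" using assms(2) by (cases s) auto
  show "hd s \<le> z" using assms(1,3) unfolding s by auto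
  obtain u b where s2: "s = u @ [b]" using assms(2) by (metis rev_exhaust)
  show "z \<le> last s" using assms(1,3) unfolding s2 by (auto simp: sorted_wrt_append)
qed

lemma partitions_finite: "finite (partitions k l)"
proof -
  have "partitions k l \<subseteq> {s. set s \<subseteq> {k..l} \<and> length s \<le> Suc l}"
  proof
    fix s assume s: "s \<in> partitions k l"
    hence ne: "s \<noteq> []" and so: "sorted_wrt (<) s" and hd: "hd s = k" and la: "last s = l"
      by (auto simp: partitions_def)
    have "set s \<subseteq> {k..l}" using sorted_bounds[OF so ne] hd la by auto
    moreover have "distinct s" using so by (simp add: strict_sorted_iff)
    hence "length s = card (set s)" by (simp add: distinct_card)
    moreover have "card (set s) \<le> card {k..l}" using \<open>set s \<subseteq> {k..l}\<close> by (intro card_mono) auto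
    ultimately show "s \<in> {s. set s \<subseteq> {k..l} \<and> length s \<le> Suc l}" by auto
  qed
  thus ?thesis by (rule finite_subset) (rule finite_lists_length_le, simp)
qed

lemma partitions_triv: "k < l \<Longrightarrow> [k, l] \<in> partitions k l"
  by (simp add: partitions_def)

lemma V_nonneg: "0 \<le> V q A k l"
proof (cases "k < l")
  case True
  let ?S = "(\<lambda>s. \<Sum>j<length s - 1. (A (s ! j) (s ! Suc j)) powr q) ` partitions k l"
  have "(\<Sum>j<length [k,l] - 1. (A ([k,l] ! j) ([k,l] ! Suc j)) powr q) \<in> ?S"
    using partitions_triv[OF True] by blast
  hence "(\<Sum>j<length [k,l] - 1. (A ([k,l] ! j) ([k,l] ! Suc j)) powr q) \<le> Max ?S"
    using partitions_finite by (intro Max_ge) auto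
  moreover have "0 \<le> (\<Sum>j<length [k,l] - 1. (A ([k,l] ! j) ([k,l] ! Suc j)) powr q)"
    by (intro sum_nonneg) auto
  ultimately have "0 \<le> Max ?S" by linarith
  thus ?thesis using True by (simp add: V_def)
qed (simp add: V_def)

lemma V_ge: "k < l \<Longrightarrow> A k l powr q \<le> V q A k l"
proof -
  assume kl: "k < l"
  let ?S = "(\<lambda>s. \<Sum>j<length s - 1. (A (s ! j) (s ! Suc j)) powr q) ` partitions k l"
  have "(\<Sum>j<length [k,l] - 1. (A ([k,l] ! j) ([k,l] ! Suc j)) powr q) \<in> ?S"
    using partitions_triv[OF kl] by blast
  hence "(\<Sum>j<length [k,l] - 1. (A ([k,l] ! j) ([k,l] ! Suc j)) powr q) \<le> Max ?S"
    using partitions_finite by (intro Max_ge) auto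
  thus ?thesis using kl by (simp add: V_def)
qed

lemma V_super:
  assumes "k \<le> m" "m \<le> l"
  shows "V q A k m + V q A m l \<le> V q A k l"
proof (cases "k = m \<or> m = l")
  case True
  then show ?thesis by (auto simp: V_def)
next
  case False
  hence km: "k < m" and ml: "m < l" using assms by auto
  let ?g = "\<lambda>a b. A a b powr q"
  let ?F = "\<lambda>s. \<Sum>j<length s - 1. (A (s ! j) (s ! Suc j)) powr q"
  have F: "?F s = psum ?g s" for s by (rule psum_eq)
  obtain s1 where s1: "s1 \<in> partitions k m" "?F s1 = Max (?F ` partitions k m)"
    using Max_in[of "?F ` partitions k m"] partitions_finite partitions_triv[OF km] by fastforce
  obtain s2 where s2: "s2 \<in> partitions m l" "?F s2 = Max (?F ` partitions m l)"
    using Max_in[of "?F ` partitions m l"] partitions_finite partitions_triv[OF ml] by fastforce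
  have p1: "sorted_wrt (<) s1" "2 \<le> length s1" "hd s1 = k" "last s1 = m"
    and p2: "sorted_wrt (<) s2" "2 \<le> length s2" "hd s2 = m" "last s2 = l"
    using s1(1) s2(1) by (auto simp: partitions_def)
  have ne1: "s1 \<noteq> []" and ne2: "s2 \<noteq> []" using p1 p2 by auto
  obtain c t where s2e: "s2 = c # t" "t \<noteq> []" using p2(2) by (cases s2; cases "tl s2") auto
  have cm: "c = m" using p2(3) s2e by simp
  have "s1 @ tl s2 \<in> partitions k l"
  proof -
    have st: "sorted_wrt (<) t" using p2(1) s2e by simp
    have "\<forall>y\<in>set t. m < y" using p2(1) s2e cm by simp
    moreover have "\<forall>x\<in>set s1. x \<le> m" using sorted_bounds[OF p1(1) ne1] p1(4) by auto
    ultimately have "sorted_wrt (<) (s1 @ t)" using p1(1) st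
      by (auto simp: sorted_wrt_append intro: le_less_trans)
    moreover have "hd (s1 @ t) = k" using ne1 p1(3) by simp
    moreover have "last (s1 @ t) = l" using s2e p2(4) by simp
    moreover have "2 \<le> length (s1 @ t)" using p1(2) by simp
    ultimately show ?thesis using s2e by (simp add: partitions_def)
  qed
  hence "?F (s1 @ tl s2) \<le> Max (?F ` partitions k l)"
    using partitions_finite by (intro Max_ge imageI) auto
  moreover have "?F (s1 @ tl s2) = ?F s1 + ?F s2"
    unfolding F using psum_app[OF ne1 ne2] p1(4) p2(3) by simp
  ultimately show ?thesis using s1(2) s2(2) km ml by (simp add: V_def)
qed

lemma V_mono:
  assumes "k \<le> a" "a \<le> b" "b \<le> l"
  shows "V q A a b \<le> V q A k l"
  using V_super[of k a b q A] V_super[of k b l q A] V_nonneg[of q A k a] V_nonneg[of q A b l] assms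
  by linarith



lemma omega_chain:
  fixes \<omega> :: "nat \<Rightarrow> nat \<Rightarrow> real"
  assumes nn: "\<And>s t. 0 \<le> \<omega> s t"
    and sup: "\<And>s m t. s \<le> m \<Longrightarrow> m \<le> t \<Longrightarrow> \<omega> s m + \<omega> m t \<le> \<omega> s t"
    and mono: "mono \<sigma>"
  shows "(\<Sum>i=1..n. \<omega> (\<sigma> (i - 1)) (\<sigma> (Suc i))) \<le> \<omega> (\<sigma> 0) (\<sigma> (Suc n)) + \<omega> (\<sigma> 0) (\<sigma> n)"
proof (induction n)
  case 0
  then show ?case using nn by simp
next
  case (Suc n)
  have "(\<Sum>i=1..Suc n. \<omega> (\<sigma> (i - 1)) (\<sigma> (Suc i)))
      = (\<Sum>i=1..n. \<omega> (\<sigma> (i - 1)) (\<sigma> (Suc i))) + \<omega> (\<sigma> n) (\<sigma> (Suc (Suc n)))" by simp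
  also have "\<dots> \<le> \<omega> (\<sigma> 0) (\<sigma> (Suc n)) + \<omega> (\<sigma> 0) (\<sigma> n) + \<omega> (\<sigma> n) (\<sigma> (Suc (Suc n)))"
    using Suc by simp
  also have "\<dots> \<le> \<omega> (\<sigma> 0) (\<sigma> (Suc (Suc n))) + \<omega> (\<sigma> 0) (\<sigma> (Suc n))"
    using sup[of "\<sigma> 0" "\<sigma> n" "\<sigma> (Suc (Suc n))"] mono by (simp add: monoD)
  finally show ?case .
qed

lemma exists_below_avg:
  fixes g :: "nat \<Rightarrow> real"
  assumes "(\<Sum>i=1..Suc n. g i) \<le> S"
  shows "\<exists>i\<in>{1..Suc n}. g i \<le> S / real (Suc n)"
proof (rule ccontr)
  assume "\<not> ?thesis"
  hence "\<forall>i\<in>{1..Suc n}. S / real (Suc n) < g i" by auto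
  hence "(\<Sum>i=1..Suc n. S / real (Suc n)) < (\<Sum>i=1..Suc n. g i)"
    by (intro sum_strict_mono) auto
  thus False using assms by simp
qed

lemma split_sum_at:
  fixes h :: "nat \<Rightarrow> 'b::comm_monoid_add"
  assumes "r \<le> n"
  shows "(\<Sum>j\<le>Suc n. h j) = (\<Sum>j<r. h j) + h r + h (Suc r) + (\<Sum>j\<in>{Suc (Suc r)..Suc n}. h j)"
proof -
  have a: "{..Suc n} = {..<r} \<union> {r..Suc n}" using assms by auto
  have "(\<Sum>j\<le>Suc n. h j) = (\<Sum>j<r. h j) + (\<Sum>j\<in>{r..Suc n}. h j)"
    unfolding a by (rule sum.union_disjoint) auto
  also have "(\<Sum>j\<in>{r..Suc n}. h j) = h r + (\<Sum>j\<in>{Suc r..Suc n}. h j)"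
    using assms by (intro sum.atLeast_Suc_atMost) auto
  also have "(\<Sum>j\<in>{Suc r..Suc n}. h j) = h (Suc r) + (\<Sum>j\<in>{Suc (Suc r)..Suc n}. h j)"
    using assms by (intro sum.atLeast_Suc_atMost) auto
  finally show ?thesis by (simp add: add.assoc)
qed

lemma split_sum_at2:
  fixes h :: "nat \<Rightarrow> 'b::comm_monoid_add"
  assumes "r \<le> n"
  shows "(\<Sum>j\<le>n. h j) = (\<Sum>j<r. h j) + h r + (\<Sum>j\<in>{Suc r..n}. h j)"
proof -
  have a: "{..n} = {..<r} \<union> {r..n}" using assms by auto
  have "(\<Sum>j\<le>n. h j) = (\<Sum>j<r. h j) + (\<Sum>j\<in>{r..n}. h j)"
    unfolding a by (rule sum.union_disjoint) auto
  also have "(\<Sum>j\<in>{r..n}. h j) = h r + (\<Sum>j\<in>{Suc r..n}. h j)"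
    using assms by (intro sum.atLeast_Suc_atMost) auto
  finally show ?thesis by (simp add: add.assoc)
qed

lemma sew_core:
  fixes \<Xi> :: "nat \<Rightarrow> nat \<Rightarrow> 'b::real_normed_vector" and \<omega> :: "nat \<Rightarrow> nat \<Rightarrow> real"
  assumes th: "0 \<le> \<theta>"
    and nn: "\<And>s t. 0 \<le> \<omega> s t"
    and sup: "\<And>s m t. s \<le> m \<Longrightarrow> m \<le> t \<Longrightarrow> \<omega> s m + \<omega> m t \<le> \<omega> s t"
    and delta: "\<And>s m t. a \<le> s \<Longrightarrow> s < m \<Longrightarrow> m < t \<Longrightarrow> t \<le> b \<Longrightarrow>
        norm (\<Xi> s t - \<Xi> s m - \<Xi> m t) \<le> \<omega> s t powr \<theta>"
  shows "strict_mono \<sigma> \<Longrightarrow> \<sigma> 0 = a \<Longrightarrow> \<sigma> (Suc n) = b \<Longrightarrow>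
     norm ((\<Sum>j\<le>n. \<Xi> (\<sigma> j) (\<sigma> (Suc j))) - \<Xi> a b) \<le> (\<Sum>i=1..n. (2 * \<omega> a b / real i) powr \<theta>)"
proof (induction n arbitrary: \<sigma>)
  case 0
  then show ?case by simp
next
  case (Suc n)
  note sm = Suc.prems(1)
  have mono: "mono \<sigma>" using sm by (rule strict_mono_mono)
  have "\<sigma> 0 \<le> \<sigma> (Suc n)" "\<sigma> (Suc n) \<le> \<sigma> (Suc (Suc n))" using mono by (simp_all add: monoD)
  have omab: "\<omega> (\<sigma> 0) (\<sigma> (Suc n)) \<le> \<omega> a b"
    using sup[of "\<sigma> 0" "\<sigma> (Suc n)" "\<sigma> (Suc (Suc n))"] nn[of "\<sigma> (Suc n)" "\<sigma> (Suc (Suc n))"] mono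
      Suc.prems \<open>\<sigma> 0 \<le> \<sigma> (Suc n)\<close> \<open>\<sigma> (Suc n) \<le> \<sigma> (Suc (Suc n))\<close> by simp
  have "(\<Sum>i=1..Suc n. \<omega> (\<sigma> (i - 1)) (\<sigma> (Suc i))) \<le> 2 * \<omega> a b"
    using omega_chain[of \<omega> \<sigma> "Suc n", OF nn sup mono] omab Suc.prems by simp
  then obtain i where i: "i \<in> {1..Suc n}" "\<omega> (\<sigma> (i - 1)) (\<sigma> (Suc i)) \<le> 2 * \<omega> a b / real (Suc n)"
    using exists_below_avg by blast
  obtain r where r: "i = Suc r" "r \<le> n" using i(1) by (cases i) auto
  define \<sigma>' where "\<sigma>' j = (if j \<le> r then \<sigma> j else \<sigma> (Suc j))" for j
  have sm': "strict_mono \<sigma>'"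
    unfolding strict_mono_def \<sigma>'_def using sm
    by (auto simp: strict_mono_less)
  have s'0: "\<sigma>' 0 = a" using Suc.prems by (simp add: \<sigma>'_def)
  have s'n: "\<sigma>' (Suc n) = b" using Suc.prems r by (simp add: \<sigma>'_def)
  have IH: "norm ((\<Sum>j\<le>n. \<Xi> (\<sigma>' j) (\<sigma>' (Suc j))) - \<Xi> a b) \<le> (\<Sum>i=1..n. (2 * \<omega> a b / real i) powr \<theta>)"
    using Suc.IH[OF sm' s'0 s'n] .
  let ?g = "\<lambda>j. \<Xi> (\<sigma> j) (\<sigma> (Suc j))"
  let ?g' = "\<lambda>j. \<Xi> (\<sigma>' j) (\<sigma>' (Suc j))"
  have e1: "(\<Sum>j\<le>Suc n. ?g j) = (\<Sum>j<r. ?g j) + ?g r + ?g (Suc r) + (\<Sum>j\<in>{Suc (Suc r)..Suc n}. ?g j)"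
    using split_sum_at[OF r(2)] .
  have e2: "(\<Sum>j\<le>n. ?g' j) = (\<Sum>j<r. ?g' j) + ?g' r + (\<Sum>j\<in>{Suc r..n}. ?g' j)"
    using split_sum_at2[OF r(2)] .
  have e3: "(\<Sum>j<r. ?g' j) = (\<Sum>j<r. ?g j)" by (intro sum.cong) (auto simp: \<sigma>'_def)
  have e4: "?g' r = \<Xi> (\<sigma> r) (\<sigma> (Suc (Suc r)))" by (simp add: \<sigma>'_def)
  have e5: "(\<Sum>j\<in>{Suc r..n}. ?g' j) = (\<Sum>j\<in>{Suc r..n}. ?g (Suc j))"
    by (intro sum.cong) (auto simp: \<sigma>'_def)
  have e6: "(\<Sum>j\<in>{Suc r..n}. ?g (Suc j)) = (\<Sum>j\<in>{Suc (Suc r)..Suc n}. ?g j)"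
    by (rule sum.shift_bounds_cl_Suc_ivl[symmetric])
  have diff: "(\<Sum>j\<le>Suc n. ?g j) - (\<Sum>j\<le>n. ?g' j)
      = -(\<Xi> (\<sigma> r) (\<sigma> (Suc (Suc r))) - \<Xi> (\<sigma> r) (\<sigma> (Suc r)) - \<Xi> (\<sigma> (Suc r)) (\<sigma> (Suc (Suc r))))"
    unfolding e1 e2 e3 e4 e5 e6 by (simp add: algebra_simps)
  have ar: "a \<le> \<sigma> r" using Suc.prems(2) mono by (metis le0 monoD)
  have rb: "\<sigma> (Suc (Suc r)) \<le> b" using Suc.prems(3) mono r(2) by (metis Suc_le_mono monoD)
  have "norm (\<Xi> (\<sigma> r) (\<sigma> (Suc (Suc r))) - \<Xi> (\<sigma> r) (\<sigma> (Suc r)) - \<Xi> (\<sigma> (Suc r)) (\<sigma> (Suc (Suc r))))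
      \<le> \<omega> (\<sigma> r) (\<sigma> (Suc (Suc r))) powr \<theta>"
    using delta[OF ar _ _ rb] sm by (simp add: strict_mono_less)
  also have "\<dots> \<le> (2 * \<omega> a b / real (Suc n)) powr \<theta>"
    using i(2) r(1) nn th by (intro powr_mono2) auto
  finally have dn: "norm ((\<Sum>j\<le>Suc n. ?g j) - (\<Sum>j\<le>n. ?g' j)) \<le> (2 * \<omega> a b / real (Suc n)) powr \<theta>"
    unfolding diff norm_minus_cancel by simp
  have "norm ((\<Sum>j\<le>Suc n. ?g j) - \<Xi> a b)
      \<le> norm ((\<Sum>j\<le>Suc n. ?g j) - (\<Sum>j\<le>n. ?g' j)) + norm ((\<Sum>j\<le>n. ?g' j) - \<Xi> a b)"
    using norm_triangle_ineq[of "(\<Sum>j\<le>Suc n. ?g j) - (\<Sum>j\<le>n. ?g' j)" "(\<Sum>j\<le>n. ?g' j) - \<Xi> a b"] by simp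
  also have "\<dots> \<le> (2 * \<omega> a b / real (Suc n)) powr \<theta> + (\<Sum>i=1..n. (2 * \<omega> a b / real i) powr \<theta>)"
    using dn IH by linarith
  finally show ?case by simp
qed



lemma powr_subadd:
  fixes u v \<theta> :: real
  assumes "0 \<le> u" "0 \<le> v" "0 < \<theta>" "\<theta> \<le> 1"
  shows "(u + v) powr \<theta> \<le> u powr \<theta> + v powr \<theta>"
proof (cases "u + v = 0")
  case True
  then show ?thesis using assms by simp
next
  case False
  define s where "s = u + v"
  have s: "0 < s" using False assms by (simp add: s_def)
  have a: "u / s \<le> (u / s) powr \<theta>"
    using powr_mono'[of \<theta> 1 "u/s"] assms s by (simp add: s_def)
  have b: "v / s \<le> (v / s) powr \<theta>"
    using powr_mono'[of \<theta> 1 "v/s"] assms s by (simp add: s_def)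
  have "s powr \<theta> = s powr \<theta> * (u / s + v / s)" using s by (simp add: s_def add_divide_distrib[symmetric])
  also have "\<dots> \<le> s powr \<theta> * ((u / s) powr \<theta> + (v / s) powr \<theta>)"
    using a b by (intro mult_left_mono) auto
  also have "\<dots> = u powr \<theta> + v powr \<theta>"
    using s by (simp add: powr_divide distrib_left)
  finally show ?thesis by (simp add: s_def)
qed

lemma sew_range:
  fixes \<Xi> :: "nat \<Rightarrow> nat \<Rightarrow> 'b::real_normed_vector" and \<omega> :: "nat \<Rightarrow> nat \<Rightarrow> real"
  assumes th: "0 \<le> \<theta>"
    and nn: "\<And>s t. 0 \<le> \<omega> s t"
    and sup: "\<And>s m t. s \<le> m \<Longrightarrow> m \<le> t \<Longrightarrow> \<omega> s m + \<omega> m t \<le> \<omega> s t"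
    and delta: "\<And>s m t. a \<le> s \<Longrightarrow> s < m \<Longrightarrow> m < t \<Longrightarrow> t \<le> b \<Longrightarrow>
        norm (\<Xi> s t - \<Xi> s m - \<Xi> m t) \<le> \<omega> s t powr \<theta>"
    and ab: "a < b" "b - a \<le> Suc N"
  shows "norm ((\<Sum>j<b - a. \<Xi> (a + j) (a + Suc j)) - \<Xi> a b) \<le> (2 powr \<theta> * zetaN N \<theta>) * \<omega> a b powr \<theta>"
proof -
  define n where "n = b - a - 1"
  have sm: "strict_mono (\<lambda>j. a + j)" by (simp add: strict_mono_def)
  have bn: "(\<lambda>j. a + j) (Suc n) = b" using ab by (simp add: n_def)
  have core: "norm ((\<Sum>j\<le>n. \<Xi> (a + j) (a + Suc j)) - \<Xi> a b) \<le> (\<Sum>i=1..n. (2 * \<omega> a b / real i) powr \<theta>)"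
    using sew_core[where \<Xi>=\<Xi> and \<omega>=\<omega> and \<theta>=\<theta> and a=a and b=b, OF th nn sup delta, of "\<lambda>j. a + j" n] sm bn by simp
  have "{..n} = {..<b - a}" using ab by (auto simp: n_def)
  hence core': "norm ((\<Sum>j<b - a. \<Xi> (a + j) (a + Suc j)) - \<Xi> a b) \<le> (\<Sum>i=1..n. (2 * \<omega> a b / real i) powr \<theta>)"
    using core by simp
  have "(\<Sum>i=1..n. (2 * \<omega> a b / real i) powr \<theta>) = (\<Sum>i=1..n. (2 powr \<theta> * \<omega> a b powr \<theta>) * real i powr (- \<theta>))"
    by (intro sum.cong) (auto simp: powr_divide powr_mult powr_minus_divide)
  also have "\<dots> = (2 powr \<theta> * \<omega> a b powr \<theta>) * (\<Sum>i=1..n. real i powr (- \<theta>))"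
    by (simp add: sum_distrib_left)
  also have "\<dots> \<le> (2 powr \<theta> * \<omega> a b powr \<theta>) * zetaN N \<theta>"
    unfolding zetaN_def using ab
    by (intro mult_left_mono sum_mono2) (auto simp: n_def)
  finally show ?thesis using core' by (simp add: mult_ac)
qed

lemma halves_add: "(a1::real) + a2 \<le> a3 \<Longrightarrow> b1 + b2 \<le> b3 \<Longrightarrow> (a1 + b1) / 2 + (a2 + b2) / 2 \<le> (a3 + b3) / 2"
  by (simp add: field_simps)

lemma super_mono:
  fixes \<omega> :: "nat \<Rightarrow> nat \<Rightarrow> real"
  assumes nn: "\<And>s t. 0 \<le> \<omega> s t"
    and sup: "\<And>s m t. s \<le> m \<Longrightarrow> m \<le> t \<Longrightarrow> \<omega> s m + \<omega> m t \<le> \<omega> s t"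
    and "a \<le> s" "s \<le> t" "t \<le> b"
  shows "\<omega> s t \<le> \<omega> a b"
  using sup[of a s t] sup[of a t b] nn[of a s] nn[of t b] assms(3-5) by linarith

lemma sew_mixed:
  fixes \<Xi> :: "nat \<Rightarrow> nat \<Rightarrow> 'b::real_normed_vector" and \<omega>A \<omega>B :: "nat \<Rightarrow> nat \<Rightarrow> real"
  assumes h: "0 < h" "h \<le> 1/2"
    and nn1: "\<And>s t. 0 \<le> \<omega>A s t"
    and sup1: "\<And>s m t. s \<le> m \<Longrightarrow> m \<le> t \<Longrightarrow> \<omega>A s m + \<omega>A m t \<le> \<omega>A s t"
    and nn2: "\<And>s t. 0 \<le> \<omega>B s t"
    and sup2: "\<And>s m t. s \<le> m \<Longrightarrow> m \<le> t \<Longrightarrow> \<omega>B s m + \<omega>B m t \<le> \<omega>B s t"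
    and AB: "0 \<le> A" "0 \<le> B"
    and delta: "\<And>s m t. a \<le> s \<Longrightarrow> s < m \<Longrightarrow> m < t \<Longrightarrow> t \<le> b \<Longrightarrow>
        norm (\<Xi> s t - \<Xi> s m - \<Xi> m t) \<le> A * \<omega>A s t powr (2 * h) + B * (\<omega>A s t * \<omega>B s t) powr h"
    and ab: "a < b" "b - a \<le> Suc N"
  shows "norm ((\<Sum>j<b - a. \<Xi> (a + j) (a + Suc j)) - \<Xi> a b)
     \<le> 2 * (2 powr (2 * h) * zetaN N (2 * h)) * (A * \<omega>A a b powr (2 * h) + B * (\<omega>A a b * \<omega>B a b) powr h)"
proof -
  define \<theta> where "\<theta> = 2 * h"
  have th: "0 < \<theta>" "\<theta> \<le> 1" using h by (auto simp: \<theta>_def)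
  define K where "K = 2 powr \<theta> * zetaN N \<theta>"
  have K0: "0 \<le> K" unfolding K_def zetaN_def by (intro mult_nonneg_nonneg sum_nonneg) auto
  let ?S = "norm ((\<Sum>j<b - a. \<Xi> (a + j) (a + Suc j)) - \<Xi> a b)"
  have R0: "0 \<le> A * \<omega>A a b powr \<theta> + B * (\<omega>A a b * \<omega>B a b) powr h"
    using AB by (intro add_nonneg_nonneg mult_nonneg_nonneg) auto
  have pw: "(c powr (1 / \<theta>)) powr \<theta> = c" if "0 \<le> c" for c
    using th that by (simp add: powr_powr)
  show ?thesis
  proof (cases "\<omega>A a b * \<omega>B a b = 0")
    case True
    have z: "\<omega>A s t * \<omega>B s t = 0" if "a \<le> s" "s \<le> t" "t \<le> b" for s t
    proof -
      have "\<omega>A s t \<le> \<omega>A a b" "\<omega>B s t \<le> \<omega>B a b"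
        using super_mono[of \<omega>A, OF nn1 sup1] super_mono[of \<omega>B, OF nn2 sup2] that by auto
      thus ?thesis using True nn1[of s t] nn2[of s t] nn1[of a b] nn2[of a b]
        by (metis antisym mult_eq_0_iff)
    qed
    define \<omega> where "\<omega> s t = A powr (1 / \<theta>) * \<omega>A s t" for s t
    have nn: "0 \<le> \<omega> s t" for s t using nn1 by (simp add: \<omega>_def)
    have sup: "\<omega> s m + \<omega> m t \<le> \<omega> s t" if "s \<le> m" "m \<le> t" for s m t
      using mult_left_mono[OF sup1[OF that], of "A powr (1 / \<theta>)"] by (simp add: \<omega>_def distrib_left)
    have wp: "\<omega> s t powr \<theta> = A * \<omega>A s t powr \<theta>" for s t
      unfolding \<omega>_def powr_mult using pw AB by simp
    have delta': "norm (\<Xi> s t - \<Xi> s m - \<Xi> m t) \<le> \<omega> s t powr \<theta>"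
      if "a \<le> s" "s < m" "m < t" "t \<le> b" for s m t
    proof -
      have "norm (\<Xi> s t - \<Xi> s m - \<Xi> m t) \<le> A * \<omega>A s t powr \<theta>"
        using delta[OF that] z[of s t] that h by (simp add: \<theta>_def)
      thus ?thesis by (simp add: wp)
    qed
    have "?S \<le> K * \<omega> a b powr \<theta>"
      using sew_range[where \<Xi>=\<Xi> and \<omega>=\<omega> and \<theta>=\<theta> and a=a and b=b, OF _ nn sup delta' ab] th unfolding K_def by simp
    also have "\<dots> = K * (A * \<omega>A a b powr \<theta>)" by (simp add: wp)
    also have "\<dots> \<le> 2 * K * (A * \<omega>A a b powr \<theta> + B * (\<omega>A a b * \<omega>B a b) powr h)"
      using K0 AB by (simp add: True mult_nonneg_nonneg)
    finally show ?thesis unfolding K_def \<theta>_def .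
  next
    case False
    have p1: "0 < \<omega>A a b" and p2: "0 < \<omega>B a b" using False nn1[of a b] nn2[of a b]
      by (auto simp: less_le)
    define lam where "lam = sqrt (\<omega>B a b / \<omega>A a b)"
    have lp: "0 < lam" using p1 p2 by (simp add: lam_def)
    define \<omega> where "\<omega> s t = 2 powr (1 / \<theta>) * (A powr (1 / \<theta>) * \<omega>A s t
        + B powr (1 / \<theta>) * ((lam * \<omega>A s t + \<omega>B s t / lam) / 2))" for s t
    have nn: "0 \<le> \<omega> s t" for s t using nn1[of s t] nn2[of s t] lp by (simp add: \<omega>_def)
    have sup: "\<omega> s m + \<omega> m t \<le> \<omega> s t" if "s \<le> m" "m \<le> t" for s m t
    proof -
      have a1: "A powr (1 / \<theta>) * \<omega>A s m + A powr (1 / \<theta>) * \<omega>A m t \<le> A powr (1 / \<theta>) * \<omega>A s t"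
        using mult_left_mono[OF sup1[OF that], of "A powr (1 / \<theta>)"] by (simp add: distrib_left)
      have "lam * \<omega>A s m + lam * \<omega>A m t \<le> lam * \<omega>A s t"
        using mult_left_mono[OF sup1[OF that], of lam] lp by (simp add: distrib_left)
      moreover have "\<omega>B s m / lam + \<omega>B m t / lam \<le> \<omega>B s t / lam"
        using divide_right_mono[OF sup2[OF that], of lam] lp by (simp add: add_divide_distrib)
      ultimately have "(lam * \<omega>A s m + \<omega>B s m / lam) / 2 + (lam * \<omega>A m t + \<omega>B m t / lam) / 2
          \<le> (lam * \<omega>A s t + \<omega>B s t / lam) / 2" by (rule halves_add)
      hence "B powr (1 / \<theta>) * ((lam * \<omega>A s m + \<omega>B s m / lam) / 2 + (lam * \<omega>A m t + \<omega>B m t / lam) / 2)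
          \<le> B powr (1 / \<theta>) * ((lam * \<omega>A s t + \<omega>B s t / lam) / 2)"
        by (rule mult_left_mono) simp
      hence a2: "B powr (1 / \<theta>) * ((lam * \<omega>A s m + \<omega>B s m / lam) / 2) + B powr (1 / \<theta>) * ((lam * \<omega>A m t + \<omega>B m t / lam) / 2)
          \<le> B powr (1 / \<theta>) * ((lam * \<omega>A s t + \<omega>B s t / lam) / 2)"
        by (simp only: distrib_left)
      have "\<omega> s m + \<omega> m t = 2 powr (1 / \<theta>) * ((A powr (1 / \<theta>) * \<omega>A s m + A powr (1 / \<theta>) * \<omega>A m t)
         + (B powr (1 / \<theta>) * ((lam * \<omega>A s m + \<omega>B s m / lam) / 2) + B powr (1 / \<theta>) * ((lam * \<omega>A m t + \<omega>B m t / lam) / 2)))"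
        by (simp add: \<omega>_def algebra_simps)
      also have "\<dots> \<le> \<omega> s t" unfolding \<omega>_def
        by (rule mult_left_mono[OF add_mono[OF a1 a2]]) simp
      finally show ?thesis .
    qed
    have amgm: "(x * y) powr h \<le> ((lam * x + y / lam) / 2) powr \<theta>" if "0 \<le> x" "0 \<le> y" for x y
    proof -
      have "(x * y) powr h = sqrt (x * y) powr \<theta>"
        using that by (simp add: powr_half_sqrt[symmetric] powr_powr \<theta>_def)
      also have "sqrt (x * y) = sqrt ((lam * x) * (y / lam))" using lp by simp
      finally have e: "(x * y) powr h = sqrt ((lam * x) * (y / lam)) powr \<theta>" .
      have "sqrt ((lam * x) * (y / lam)) \<le> (lam * x + y / lam) / 2"
        using that lp by (intro arith_geo_mean_sqrt) auto
      hence "sqrt ((lam * x) * (y / lam)) powr \<theta> \<le> ((lam * x + y / lam) / 2) powr \<theta>"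
        using th that lp by (intro powr_mono2) auto
      thus ?thesis using e by simp
    qed
    have delta': "norm (\<Xi> s t - \<Xi> s m - \<Xi> m t) \<le> \<omega> s t powr \<theta>"
      if "a \<le> s" "s < m" "m < t" "t \<le> b" for s m t
    proof -
      define u where "u = A powr (1 / \<theta>) * \<omega>A s t"
      define v where "v = B powr (1 / \<theta>) * ((lam * \<omega>A s t + \<omega>B s t / lam) / 2)"
      have u0: "0 \<le> u" and v0: "0 \<le> v" using nn1[of s t] nn2[of s t] lp by (auto simp: u_def v_def)
      have "\<omega> s t powr \<theta> = 2 * (u + v) powr \<theta>"
        unfolding \<omega>_def u_def v_def powr_mult using pw[of 2] by simp
      moreover have "u powr \<theta> = A * \<omega>A s t powr \<theta>" unfolding u_def powr_mult using pw AB by simp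
      moreover have "v powr \<theta> = B * ((lam * \<omega>A s t + \<omega>B s t / lam) / 2) powr \<theta>"
        unfolding v_def powr_mult using pw AB by simp
      moreover have "u powr \<theta> \<le> (u + v) powr \<theta>" "v powr \<theta> \<le> (u + v) powr \<theta>"
        using u0 v0 th by (auto intro: powr_mono2)
      moreover have "B * (\<omega>A s t * \<omega>B s t) powr h \<le> B * ((lam * \<omega>A s t + \<omega>B s t / lam) / 2) powr \<theta>"
        using amgm[OF nn1 nn2] AB by (intro mult_left_mono) auto
      ultimately have "A * \<omega>A s t powr (2 * h) + B * (\<omega>A s t * \<omega>B s t) powr h \<le> \<omega> s t powr \<theta>"
        unfolding \<theta>_def by linarith
      thus ?thesis using delta[OF that] by linarith
    qed
    have Sle: "?S \<le> K * \<omega> a b powr \<theta>"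
      using sew_range[where \<Xi>=\<Xi> and \<omega>=\<omega> and \<theta>=\<theta> and a=a and b=b, OF _ nn sup delta' ab] th unfolding K_def by simp
    have "lam * \<omega>A a b = sqrt (\<omega>A a b * \<omega>B a b)"
      unfolding lam_def using p1 p2 by (simp add: real_sqrt_divide real_sqrt_mult field_simps)
    moreover have "\<omega>B a b / lam = sqrt (\<omega>A a b * \<omega>B a b)"
      unfolding lam_def using p1 p2 by (simp add: real_sqrt_divide real_sqrt_mult field_simps)
    ultimately have wab: "\<omega> a b = 2 powr (1 / \<theta>) * (A powr (1 / \<theta>) * \<omega>A a b + B powr (1 / \<theta>) * sqrt (\<omega>A a b * \<omega>B a b))"
      by (simp add: \<omega>_def)
    define u where "u = A powr (1 / \<theta>) * \<omega>A a b"
    define v where "v = B powr (1 / \<theta>) * sqrt (\<omega>A a b * \<omega>B a b)"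
    have u0: "0 \<le> u" and v0: "0 \<le> v" using nn1[of a b] nn2[of a b] by (auto simp: u_def v_def)
    have "\<omega> a b powr \<theta> = 2 * (u + v) powr \<theta>"
      unfolding wab u_def v_def powr_mult using pw[of 2] by simp
    also have "(u + v) powr \<theta> \<le> u powr \<theta> + v powr \<theta>" by (rule powr_subadd[OF u0 v0 th])
    also have "u powr \<theta> = A * \<omega>A a b powr \<theta>" unfolding u_def powr_mult using pw AB by simp
    also have "v powr \<theta> = B * (\<omega>A a b * \<omega>B a b) powr h"
      unfolding v_def powr_mult using pw AB nn1[of a b] nn2[of a b]
      by (simp add: powr_half_sqrt[symmetric] powr_powr \<theta>_def powr_mult)
    finally have "\<omega> a b powr \<theta> \<le> 2 * (A * \<omega>A a b powr \<theta> + B * (\<omega>A a b * \<omega>B a b) powr h)" by simp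
    hence "K * \<omega> a b powr \<theta> \<le> K * (2 * (A * \<omega>A a b powr \<theta> + B * (\<omega>A a b * \<omega>B a b) powr h))"
      using K0 by (rule mult_left_mono)
    moreover have "K * (2 * (A * \<omega>A a b powr \<theta> + B * (\<omega>A a b * \<omega>B a b) powr h))
       = 2 * K * (A * \<omega>A a b powr \<theta> + B * (\<omega>A a b * \<omega>B a b) powr h)" by simp
    ultimately have "?S \<le> 2 * K * (A * \<omega>A a b powr \<theta> + B * (\<omega>A a b * \<omega>B a b) powr h)"
      using Sle by linarith
    thus ?thesis unfolding K_def \<theta>_def .
  qed
qed



context
  fixes g :: "'a::real_normed_vector \<Rightarrow> 'a" and D1 :: "'a \<Rightarrow> 'a \<Rightarrow>\<^sub>L 'a"
    and D2 :: "'a \<Rightarrow> 'a \<Rightarrow>\<^sub>L ('a \<Rightarrow>\<^sub>L 'a)" and D3 :: "'a \<Rightarrow> 'a \<Rightarrow>\<^sub>L ('a \<Rightarrow>\<^sub>L ('a \<Rightarrow>\<^sub>L 'a))"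
  assumes C: "C3b_with g D1 D2 D3"
begin

lemma bdd_norm: "bounded (range F) \<Longrightarrow> bdd_above (range (\<lambda>x. norm (F x)))"
  by (auto simp: bounded_iff bdd_above_def)

lemma c_g: "norm (g y) \<le> (SUP x. norm (g x))"
  using C unfolding C3b_with_def by (intro cSUP_upper bdd_norm) auto

lemma c_D1: "norm (D1 y) \<le> (SUP x. norm (D1 x))"
  using C unfolding C3b_with_def by (intro cSUP_upper bdd_norm) auto

lemma c_D2: "norm (D2 y) \<le> (SUP x. norm (D2 x))"
  using C unfolding C3b_with_def by (intro cSUP_upper bdd_norm) auto

lemma c_lip: "norm (g y - g y') \<le> (SUP x. norm (D1 x)) * norm (y - y')"
proof (rule differentiable_bound[where S=UNIV and f'="\<lambda>x. blinfun_apply (D1 x)"])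
  show "(g has_derivative blinfun_apply (D1 x)) (at x within UNIV)" for x
    using C unfolding C3b_with_def by auto
  show "onorm (blinfun_apply (D1 x)) \<le> (SUP x. norm (D1 x))" for x
    using c_D1 by (simp add: norm_blinfun.rep_eq)
qed auto

lemma c_lipD: "norm (D1 y - D1 y') \<le> (SUP x. norm (D2 x)) * norm (y - y')"
proof (rule differentiable_bound[where S=UNIV and f'="\<lambda>x. blinfun_apply (D2 x)"])
  show "(D1 has_derivative blinfun_apply (D2 x)) (at x within UNIV)" for x
    using C unfolding C3b_with_def by auto
  show "onorm (blinfun_apply (D2 x)) \<le> (SUP x. norm (D2 x))" for x
    using c_D2 by (simp add: norm_blinfun.rep_eq)
qed auto

lemma c_dd:
  "norm (g a1 - g b1 - g a0 + g b0) \<le> (SUP x. norm (D1 x)) * norm ((a1 - b1) - (a0 - b0))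
     + (SUP x. norm (D2 x)) * norm (a0 - b0) * (norm (a1 - a0) + norm (b1 - b0))"
proof -
  define L1 where "L1 = (SUP x. norm (D1 x))"
  define L2 where "L2 = (SUP x. norm (D2 x))"
  define c1 where "c1 = a1 - b1"
  define c0 where "c0 = a0 - b0"
  define \<psi> where "\<psi> t = g (b1 + t *\<^sub>R c1) - g (b0 + t *\<^sub>R c0)" for t :: real
  define v where "v t = blinfun_apply (D1 (b1 + t *\<^sub>R c1)) c1 - blinfun_apply (D1 (b0 + t *\<^sub>R c0)) c0" for t :: real
  have L2: "0 \<le> L2" unfolding L2_def using c_D2[of 0] norm_ge_zero order_trans by blast
  have der: "(\<psi> has_derivative (\<lambda>h. h *\<^sub>R v t)) (at t within {0..1})" for t
  proof -
    have g': "(g has_derivative blinfun_apply (D1 y)) (at y)" for y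
      using C unfolding C3b_with_def by auto
    have l1: "((\<lambda>t. b1 + t *\<^sub>R c1) has_derivative (\<lambda>h. h *\<^sub>R c1)) (at t within {0..1})"
      by (auto intro!: derivative_eq_intros)
    have l0: "((\<lambda>t. b0 + t *\<^sub>R c0) has_derivative (\<lambda>h. h *\<^sub>R c0)) (at t within {0..1})"
      by (auto intro!: derivative_eq_intros)
    have d1: "((\<lambda>t. g (b1 + t *\<^sub>R c1)) has_derivative (\<lambda>h. blinfun_apply (D1 (b1 + t *\<^sub>R c1)) (h *\<^sub>R c1))) (at t within {0..1})"
      by (rule has_derivative_compose[OF l1 g'])
    have d0: "((\<lambda>t. g (b0 + t *\<^sub>R c0)) has_derivative (\<lambda>h. blinfun_apply (D1 (b0 + t *\<^sub>R c0)) (h *\<^sub>R c0))) (at t within {0..1})"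
      by (rule has_derivative_compose[OF l0 g'])
    have "(\<psi> has_derivative (\<lambda>h. blinfun_apply (D1 (b1 + t *\<^sub>R c1)) (h *\<^sub>R c1) - blinfun_apply (D1 (b0 + t *\<^sub>R c0)) (h *\<^sub>R c0))) (at t within {0..1})"
      unfolding \<psi>_def by (rule has_derivative_diff[OF d1 d0])
    thus ?thesis by (simp add: v_def blinfun.scaleR_right scaleR_diff_right)
  qed
  have vb: "norm (v t) \<le> L1 * norm (c1 - c0) + L2 * norm c0 * (norm (a1 - a0) + norm (b1 - b0))"
    if t: "t \<in> {0..1}" for t
  proof -
    let ?p1 = "b1 + t *\<^sub>R c1" and ?p0 = "b0 + t *\<^sub>R c0"
    have "v t = blinfun_apply (D1 ?p1) (c1 - c0) + blinfun_apply (D1 ?p1 - D1 ?p0) c0"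
      by (simp add: v_def blinfun.diff_right blinfun.diff_left)
    hence "norm (v t) \<le> norm (blinfun_apply (D1 ?p1) (c1 - c0)) + norm (blinfun_apply (D1 ?p1 - D1 ?p0) c0)"
      by (simp add: norm_triangle_ineq)
    also have "\<dots> \<le> norm (D1 ?p1) * norm (c1 - c0) + norm (D1 ?p1 - D1 ?p0) * norm c0"
      by (intro add_mono norm_blinfun)
    also have "\<dots> \<le> L1 * norm (c1 - c0) + (L2 * norm (?p1 - ?p0)) * norm c0"
      using c_D1[of ?p1] c_lipD[of ?p1 ?p0] unfolding L1_def L2_def
      by (intro add_mono mult_right_mono) auto
    also have "norm (?p1 - ?p0) \<le> norm (a1 - a0) + norm (b1 - b0)"
    proof -
      have "?p1 - ?p0 = (1 - t) *\<^sub>R (b1 - b0) + t *\<^sub>R (a1 - a0)"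
        by (simp add: c1_def c0_def algebra_simps)
      hence "norm (?p1 - ?p0) \<le> (1 - t) * norm (b1 - b0) + t * norm (a1 - a0)"
        using t by (metis (no_types, lifting) abs_of_nonneg atLeastAtMost_iff diff_ge_0_iff_ge
            norm_scaleR norm_triangle_ineq order_trans add_mono order_refl)
      also have "\<dots> \<le> norm (b1 - b0) + norm (a1 - a0)"
        using t by (intro add_mono) (auto intro!: mult_left_le_one_le)
      finally show ?thesis by simp
    qed
    hence "(L2 * norm (?p1 - ?p0)) * norm c0 \<le> L2 * (norm (a1 - a0) + norm (b1 - b0)) * norm c0"
      using L2 by (intro mult_right_mono mult_left_mono) auto
    finally show ?thesis by (simp add: mult_ac)
  qed
  have "norm (\<psi> 1 - \<psi> 0) \<le> (L1 * norm (c1 - c0) + L2 * norm c0 * (norm (a1 - a0) + norm (b1 - b0))) * norm (1 - 0 :: real)"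
  proof (rule differentiable_bound[where S="{0..1}" and f'="\<lambda>t h. h *\<^sub>R v t"])
    show "(\<psi> has_derivative (\<lambda>h. h *\<^sub>R v t)) (at t within {0..1})" for t by (rule der)
    show "onorm (\<lambda>h. h *\<^sub>R v t) \<le> L1 * norm (c1 - c0) + L2 * norm c0 * (norm (a1 - a0) + norm (b1 - b0))"
      if "t \<in> {0..1}" for t
      using vb[OF that] by (intro onorm_le) (auto simp: mult.commute intro: mult_left_mono)
  qed auto
  moreover have "\<psi> 1 - \<psi> 0 = g a1 - g b1 - g a0 + g b0"
    by (simp add: \<psi>_def c1_def c0_def)
  ultimately show ?thesis by (simp add: L1_def L2_def c1_def c0_def)
qed

end



definition om :: "nat \<Rightarrow> real \<Rightarrow> (nat \<Rightarrow> nat \<Rightarrow> real) \<Rightarrow> nat \<Rightarrow> nat \<Rightarrow> real" where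
  "om d p v a b = V p (\<lambda>a b. l1norm d (\<lambda>\<mu>. v b \<mu> - v a \<mu>)) a b"

lemma om_nn: "0 \<le> om d p v a b"
  unfolding om_def by (rule V_nonneg)

lemma om_super: "a \<le> m \<Longrightarrow> m \<le> b \<Longrightarrow> om d p v a m + om d p v m b \<le> om d p v a b"
  unfolding om_def by (rule V_super)

lemma om_mono: "k \<le> a \<Longrightarrow> a \<le> b \<Longrightarrow> b \<le> l \<Longrightarrow> om d p v a b \<le> om d p v k l"
  unfolding om_def by (rule V_mono)

lemma l1norm_nn: "0 \<le> l1norm d r"
  unfolding l1norm_def by (intro sum_nonneg) auto

lemma om_incr:
  assumes "a \<le> b" "0 < p"
  shows "l1norm d (\<lambda>\<mu>. v b \<mu> - v a \<mu>) \<le> om d p v a b powr (1 / p)"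
proof (cases "a = b")
  case True
  then show ?thesis by (simp add: l1norm_def)
next
  case False
  hence ab: "a < b" using assms by simp
  let ?X = "l1norm d (\<lambda>\<mu>. v b \<mu> - v a \<mu>)"
  have "?X powr p \<le> om d p v a b"
    unfolding om_def using V_ge[OF ab, of "\<lambda>a b. l1norm d (\<lambda>\<mu>. v b \<mu> - v a \<mu>)" p] by simp
  hence "(?X powr p) powr (1 / p) \<le> om d p v a b powr (1 / p)"
    using assms by (intro powr_mono2) auto
  moreover have "(?X powr p) powr (1 / p) = ?X"
    using assms l1norm_nn[of d] by (simp add: powr_powr)
  ultimately show ?thesis by simp
qed

lemma sum_bound:
  fixes u :: "nat \<Rightarrow> 'a::real_normed_vector"
  assumes "\<And>\<mu>. \<mu> < d \<Longrightarrow> norm (u \<mu>) \<le> K"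
  shows "norm (\<Sum>\<mu><d. r \<mu> *\<^sub>R u \<mu>) \<le> l1norm d r * K"
proof -
  have "norm (\<Sum>\<mu><d. r \<mu> *\<^sub>R u \<mu>) \<le> (\<Sum>\<mu><d. norm (r \<mu> *\<^sub>R u \<mu>))" by (rule norm_sum)
  also have "\<dots> \<le> (\<Sum>\<mu><d. \<bar>r \<mu>\<bar> * K)"
    using assms by (intro sum_mono) (auto intro: mult_left_mono)
  also have "\<dots> = l1norm d r * K" by (simp add: l1norm_def sum_distrib_right)
  finally show ?thesis .
qed

lemma telescope_shift:
  fixes y :: "nat \<Rightarrow> 'a::ab_group_add"
  shows "s \<le> t \<Longrightarrow> y t - y s = (\<Sum>j<t - s. y (s + Suc j) - y (s + j))"
  using sum_lessThan_telescope[of "\<lambda>j. y (s + j)" "t - s"] by simp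

locale euler =
  fixes d :: nat and f :: "nat \<Rightarrow> 'a::real_normed_vector \<Rightarrow> 'a" and M p :: real and N :: nat
  assumes M0: "0 \<le> M" and p2: "2 \<le> p"
    and fb: "\<And>\<mu> y. \<mu> < d \<Longrightarrow> norm (f \<mu> y) \<le> M"
    and flip: "\<And>\<mu> y y'. \<mu> < d \<Longrightarrow> norm (f \<mu> y - f \<mu> y') \<le> M * norm (y - y')"
    and fdd: "\<And>\<mu> a1 b1 a0 b0. \<mu> < d \<Longrightarrow> norm (f \<mu> a1 - f \<mu> b1 - f \<mu> a0 + f \<mu> b0)
        \<le> M * norm ((a1 - b1) - (a0 - b0)) + M * norm (a0 - b0) * (norm (a1 - a0) + norm (b1 - b0))"
begin

lemma p0: "0 < p" using p2 by simp

lemma C0: "0 \<le> CpN p N"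
  unfolding CpN_def zetaN_def by (intro mult_nonneg_nonneg sum_nonneg) auto

lemma ow_nn: "0 \<le> om d p v a b powr (1 / p)" by simp

lemma ow_mono: "k \<le> a \<Longrightarrow> a \<le> b \<Longrightarrow> b \<le> l \<Longrightarrow> om d p v a b powr (1 / p) \<le> om d p v k l powr (1 / p)"
  using p0 by (intro powr_mono2 om_mono om_nn) auto

lemma sew_inst:
  fixes \<Xi> :: "nat \<Rightarrow> nat \<Rightarrow> 'b::real_normed_vector" and \<omega>A \<omega>B :: "nat \<Rightarrow> nat \<Rightarrow> real"
  assumes nn1: "\<And>s t. 0 \<le> \<omega>A s t"
    and sup1: "\<And>s m t. s \<le> m \<Longrightarrow> m \<le> t \<Longrightarrow> \<omega>A s m + \<omega>A m t \<le> \<omega>A s t"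
    and nn2: "\<And>s t. 0 \<le> \<omega>B s t"
    and sup2: "\<And>s m t. s \<le> m \<Longrightarrow> m \<le> t \<Longrightarrow> \<omega>B s m + \<omega>B m t \<le> \<omega>B s t"
    and AB: "0 \<le> A" "0 \<le> B"
    and delta: "\<And>s m t. a \<le> s \<Longrightarrow> s < m \<Longrightarrow> m < t \<Longrightarrow> t \<le> b \<Longrightarrow>
        norm (\<Xi> s t - \<Xi> s m - \<Xi> m t) \<le> A * \<omega>A s t powr (2 / p) + B * (\<omega>A s t * \<omega>B s t) powr (1 / p)"
    and ab: "a < b" "b \<le> N"
  shows "norm ((\<Sum>j<b - a. \<Xi> (a + j) (a + Suc j)) - \<Xi> a b)
     \<le> 2 * CpN p N * (A * \<omega>A a b powr (2 / p) + B * (\<omega>A a b * \<omega>B a b) powr (1 / p))"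
proof -
  have h: "0 < 1 / p" "1 / p \<le> 1 / 2" using p2 by (auto simp: field_simps)
  have e: "2 * (1 / p) = 2 / p" by simp
  have "norm ((\<Sum>j<b - a. \<Xi> (a + j) (a + Suc j)) - \<Xi> a b)
     \<le> 2 * (2 powr (2 * (1 / p)) * zetaN N (2 * (1 / p))) * (A * \<omega>A a b powr (2 * (1 / p)) + B * (\<omega>A a b * \<omega>B a b) powr (1 / p))"
    by (rule sew_mixed[where \<Xi>=\<Xi> and \<omega>A=\<omega>A and \<omega>B=\<omega>B and a=a and b=b and N=N,
          OF h nn1 sup1 nn2 sup2 AB]) (use delta ab in \<open>auto simp: e\<close>)
  thus ?thesis unfolding e CpN_def by (simp add: mult_ac)
qed

lemma apriori:
  assumes rec: "\<And>j. j < N \<Longrightarrow> y (Suc j) = y j + (\<Sum>\<mu><d. (v (Suc j) \<mu> - v j \<mu>) *\<^sub>R f \<mu> (y j))"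
    and lN: "l \<le> N"
    and small: "M * om d p v k l powr (1 / p) \<le> \<eta>" and eta: "4 * CpN p N * \<eta> \<le> 1"
  shows "k \<le> s \<Longrightarrow> s \<le> t \<Longrightarrow> t \<le> l \<Longrightarrow> norm (y t - y s) \<le> 2 * M * om d p v s t powr (1 / p)"
proof (induction "t - s" arbitrary: s t rule: less_induct)
  case less
  show ?case
  proof (cases "s = t")
    case True
    then show ?thesis using M0 by simp
  next
    case False
    hence st: "s < t" using less.prems by simp
    let ?ow = "\<lambda>a b. om d p v a b powr (1 / p)"
    define \<Xi> where "\<Xi> a b = (\<Sum>\<mu><d. (v b \<mu> - v a \<mu>) *\<^sub>R f \<mu> (y a))" for a b
    have tele: "y t - y s = (\<Sum>j<t - s. \<Xi> (s + j) (s + Suc j))"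
    proof -
      have "y t - y s = (\<Sum>j<t - s. y (s + Suc j) - y (s + j))"
        using telescope_shift[of s t y] st by simp
      also have "\<dots> = (\<Sum>j<t - s. \<Xi> (s + j) (s + Suc j))"
      proof (intro sum.cong refl)
        fix j assume "j \<in> {..<t - s}"
        hence "s + j < N" using less.prems lN by auto
        thus "y (s + Suc j) - y (s + j) = \<Xi> (s + j) (s + Suc j)"
          using rec[of "s + j"] by (simp add: \<Xi>_def)
      qed
      finally show ?thesis .
    qed
    have delta: "norm (\<Xi> s' t' - \<Xi> s' m - \<Xi> m t')
        \<le> 0 * om d p v s' t' powr (2 / p) + (2 * M * M) * (om d p v s' t' * om d p v s' t') powr (1 / p)"
      if "s \<le> s'" "s' < m" "m < t'" "t' \<le> t" for s' m t'
    proof -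
      have eq: "\<Xi> s' t' - \<Xi> s' m - \<Xi> m t' = (\<Sum>\<mu><d. (v t' \<mu> - v m \<mu>) *\<^sub>R (f \<mu> (y s') - f \<mu> (y m)))"
        unfolding \<Xi>_def by (simp add: sum_subtractf[symmetric] algebra_simps)
      have IH: "norm (y m - y s') \<le> 2 * M * ?ow s' m"
        using less.hyps[of m s'] that less.prems by auto
      have "norm (\<Xi> s' t' - \<Xi> s' m - \<Xi> m t') \<le> l1norm d (\<lambda>\<mu>. v t' \<mu> - v m \<mu>) * (M * norm (y s' - y m))"
        unfolding eq by (intro sum_bound flip)
      also have "\<dots> \<le> ?ow m t' * (M * (2 * M * ?ow s' m))"
        using IH M0 p0 that by (intro mult_mono om_incr mult_left_mono) (auto simp: norm_minus_commute)
      also have "\<dots> \<le> ?ow s' t' * (M * (2 * M * ?ow s' t'))"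
        using that M0 by (intro mult_mono mult_left_mono ow_mono) auto
      also have "\<dots> = (2 * M * M) * (om d p v s' t' * om d p v s' t') powr (1 / p)"
        by (simp add: powr_mult)
      finally show ?thesis by simp
    qed
    have R: "norm ((\<Sum>j<t - s. \<Xi> (s + j) (s + Suc j)) - \<Xi> s t)
        \<le> 2 * CpN p N * (0 * om d p v s t powr (2 / p) + (2 * M * M) * (om d p v s t * om d p v s t) powr (1 / p))"
      by (rule sew_inst[where \<omega>A="om d p v" and \<omega>B="om d p v", OF om_nn om_super om_nn om_super])
        (use delta st less.prems lN M0 in auto)
    define P where "P = M * ?ow s t"
    have P0: "0 \<le> P" using M0 by (simp add: P_def)
    have Pe: "P \<le> \<eta>"
      using small M0 less.prems by (auto simp: P_def intro: order_trans[OF mult_left_mono[OF ow_mono]])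
    have R': "norm ((\<Sum>j<t - s. \<Xi> (s + j) (s + Suc j)) - \<Xi> s t) \<le> 4 * CpN p N * P * P"
      using R by (simp add: P_def powr_mult mult_ac)
    have X: "norm (\<Xi> s t) \<le> P"
    proof -
      have "norm (\<Xi> s t) \<le> l1norm d (\<lambda>\<mu>. v t \<mu> - v s \<mu>) * M"
        unfolding \<Xi>_def by (intro sum_bound fb)
      also have "\<dots> \<le> ?ow s t * M" using st p0 M0 by (intro mult_right_mono om_incr) auto
      finally show ?thesis by (simp add: P_def mult_ac)
    qed
    have "norm (y t - y s) \<le> norm (\<Xi> s t) + norm ((\<Sum>j<t - s. \<Xi> (s + j) (s + Suc j)) - \<Xi> s t)"
      unfolding tele using norm_triangle_ineq[of "\<Xi> s t" "(\<Sum>j<t - s. \<Xi> (s + j) (s + Suc j)) - \<Xi> s t"]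
      by simp
    also have "\<dots> \<le> P + 4 * CpN p N * P * P" using X R' by linarith
    also have "\<dots> \<le> P + P * (4 * CpN p N * \<eta>)"
      using Pe P0 C0 by (simp add: mult_ac mult_left_mono mult_right_mono)
    also have "\<dots> \<le> 2 * P" using eta P0 by (simp add: mult_left_le)
    finally show ?thesis by (simp add: P_def)
  qed
qed

end



context euler begin

lemma local_diff:
  fixes x x' :: "nat \<Rightarrow> 'a" and w w' :: "nat \<Rightarrow> nat \<Rightarrow> real"
  assumes recx: "\<And>j. j < N \<Longrightarrow> x (Suc j) = x j + (\<Sum>\<mu><d. (w (Suc j) \<mu> - w j \<mu>) *\<^sub>R f \<mu> (x j))"
    and recx': "\<And>j. j < N \<Longrightarrow> x' (Suc j) = x' j + (\<Sum>\<mu><d. (w' (Suc j) \<mu> - w' j \<mu>) *\<^sub>R f \<mu> (x' j))"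
    and lN: "l \<le> N" and kl: "k \<le> l"
    and small: "M * (om d p w k l + om d p w' k l) powr (1 / p) \<le> \<eta>"
    and eta: "12 * CpN p N * \<eta> \<le> 1" and eta4: "\<eta> \<le> 1 / 4"
    and mm: "k \<le> m" "m \<le> l"
  shows "norm (x m - x' m) \<le> 2 * norm (x k - x' k) + 4 * M * om d p (\<lambda>k \<mu>. w k \<mu> - w' k \<mu>) k l powr (1 / p)"
proof -
  define e where "e = (\<lambda>k \<mu>. w k \<mu> - w' k \<mu>)"
  define ob where "ob a b = om d p w a b + om d p w' a b" for a b
  define E where "E = om d p e"
  define z where "z j = x j - x' j" for j
  let ?C = "CpN p N"
  have ob_nn: "0 \<le> ob a b" for a b by (simp add: ob_def om_nn add_nonneg_nonneg)
  have ob_sup: "ob a c + ob c b \<le> ob a b" if "a \<le> c" "c \<le> b" for a b c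
    using om_super[OF that, of d p w] om_super[OF that, of d p w'] by (simp add: ob_def)
  have E_nn: "0 \<le> E a b" for a b by (simp add: E_def om_nn)
  have E_sup: "E a c + E c b \<le> E a b" if "a \<le> c" "c \<le> b" for a b c
    using om_super[OF that] by (simp add: E_def)
  have ob_mono: "ob a b powr (1 / p) \<le> ob k' l' powr (1 / p)" if "k' \<le> a" "a \<le> b" "b \<le> l'" for a b k' l'
    using super_mono[of ob, OF ob_nn ob_sup that] p0 ob_nn by (intro powr_mono2) auto
  have E_mono: "E a b powr (1 / p) \<le> E k' l' powr (1 / p)" if "k' \<le> a" "a \<le> b" "b \<le> l'" for a b k' l'
    using ow_mono[OF that] by (simp add: E_def)
  have w_le_ob: "om d p w a b powr (1 / p) \<le> ob a b powr (1 / p)" for a b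
    using p0 om_nn[of d p w' a b] by (intro powr_mono2) (auto simp: ob_def om_nn)
  have w'_le_ob: "om d p w' a b powr (1 / p) \<le> ob a b powr (1 / p)" for a b
    using p0 om_nn[of d p w a b] by (intro powr_mono2) (auto simp: ob_def om_nn)
  have eta0: "0 \<le> \<eta>" using small M0 by (meson mult_nonneg_nonneg order_trans powr_ge_zero)
  have smw: "M * om d p w k l powr (1 / p) \<le> \<eta>"
    using small M0 w_le_ob[of k l] by (auto simp: ob_def intro: order_trans[OF mult_left_mono])
  have smw': "M * om d p w' k l powr (1 / p) \<le> \<eta>"
    using small M0 w'_le_ob[of k l] by (auto simp: ob_def intro: order_trans[OF mult_left_mono])
  have eta': "4 * ?C * \<eta> \<le> 1" using eta mult_nonneg_nonneg[OF C0 eta0] by linarith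
  have apx: "norm (x b - x a) \<le> 2 * M * om d p w a b powr (1 / p)" if "k \<le> a" "a \<le> b" "b \<le> l" for a b
    using apriori[OF recx lN smw eta'] that by blast
  have apx': "norm (x' b - x' a) \<le> 2 * M * om d p w' a b powr (1 / p)" if "k \<le> a" "a \<le> b" "b \<le> l" for a b
    using apriori[OF recx' lN smw' eta'] that by blast
  define Z where "Z = Max ((\<lambda>j. norm (z j)) ` {k..l})"
  have Zge: "norm (z j) \<le> Z" if "k \<le> j" "j \<le> l" for j
    unfolding Z_def using that by (intro Max_ge) auto
  have Z0: "0 \<le> Z" using Zge[OF kl order_refl] norm_ge_zero order_trans by blast
  have H: "norm (z t - z s) \<le> 2 * M * Z * ob s t powr (1 / p) + 2 * M * E s t powr (1 / p)"
    if "k \<le> s" "s \<le> t" "t \<le> l" for s t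
    using that
  proof (induction "t - s" arbitrary: s t rule: less_induct)
    case less
    show ?case
    proof (cases "s = t")
      case True
      then show ?thesis using M0 Z0 by simp
    next
      case False
      hence st: "s < t" using less.prems by simp
      define Ow where "Ow a b = ob a b powr (1 / p)" for a b
      define Ee where "Ee a b = E a b powr (1 / p)" for a b
      define \<Xi>1 where "\<Xi>1 a b = (\<Sum>\<mu><d. (w b \<mu> - w a \<mu>) *\<^sub>R (f \<mu> (x a) - f \<mu> (x' a)))" for a b
      define \<Xi>2 where "\<Xi>2 a b = (\<Sum>\<mu><d. (e b \<mu> - e a \<mu>) *\<^sub>R f \<mu> (x' a))" for a b
      have step: "z (Suc j) - z j = \<Xi>1 j (Suc j) + \<Xi>2 j (Suc j)" if "j < N" for j
      proof -
        have "z (Suc j) - z j = (\<Sum>\<mu><d. (w (Suc j) \<mu> - w j \<mu>) *\<^sub>R f \<mu> (x j)) - (\<Sum>\<mu><d. (w' (Suc j) \<mu> - w' j \<mu>) *\<^sub>R f \<mu> (x' j))"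
          using recx[OF that] recx'[OF that] by (simp add: z_def algebra_simps)
        also have "\<dots> = \<Xi>1 j (Suc j) + \<Xi>2 j (Suc j)"
          unfolding \<Xi>1_def \<Xi>2_def e_def sum_subtractf[symmetric] sum.distrib[symmetric]
          by (intro sum.cong refl) (simp add: algebra_simps)
        finally show ?thesis .
      qed
      have tele: "z t - z s = (\<Sum>j<t - s. \<Xi>1 (s + j) (s + Suc j)) + (\<Sum>j<t - s. \<Xi>2 (s + j) (s + Suc j))"
      proof -
        have "z t - z s = (\<Sum>j<t - s. z (s + Suc j) - z (s + j))"
          using telescope_shift[of s t z] st by simp
        also have "\<dots> = (\<Sum>j<t - s. \<Xi>1 (s + j) (s + Suc j) + \<Xi>2 (s + j) (s + Suc j))"
        proof (intro sum.cong refl)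
          fix j assume "j \<in> {..<t - s}"
          hence "s + j < N" using less.prems lN by auto
          thus "z (s + Suc j) - z (s + j) = \<Xi>1 (s + j) (s + Suc j) + \<Xi>2 (s + j) (s + Suc j)"
            using step[of "s + j"] by simp
        qed
        finally show ?thesis by (simp add: sum.distrib)
      qed
      have Ow_nn: "0 \<le> Ow a b" for a b by (simp add: Ow_def)
      have Ee_nn: "0 \<le> Ee a b" for a b by (simp add: Ee_def)
      have OO: "Ow a b * Ow a b = ob a b powr (2 / p)" for a b
        unfolding Ow_def by (simp add: powr_add[symmetric])
      have OE: "Ow a b * Ee a b = (ob a b * E a b) powr (1 / p)" for a b
        unfolding Ow_def Ee_def by (simp add: powr_mult)
      have delta1: "norm (\<Xi>1 s' t' - \<Xi>1 s' m - \<Xi>1 m t')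
          \<le> (6 * M * M * Z) * ob s' t' powr (2 / p) + (2 * M * M) * (ob s' t' * E s' t') powr (1 / p)"
        if "s \<le> s'" "s' < m" "m < t'" "t' \<le> t" for s' m t'
      proof -
        note tt = that
        have eq: "\<Xi>1 s' t' - \<Xi>1 s' m - \<Xi>1 m t'
            = (\<Sum>\<mu><d. (w t' \<mu> - w m \<mu>) *\<^sub>R ((f \<mu> (x s') - f \<mu> (x' s')) - (f \<mu> (x m) - f \<mu> (x' m))))"
          unfolding \<Xi>1_def by (simp add: sum_subtractf[symmetric] algebra_simps)
        have IH: "norm (z m - z s') \<le> 2 * M * Z * ob s' m powr (1 / p) + 2 * M * E s' m powr (1 / p)"
          using less.hyps[of m s'] that less.prems by auto
        have r: "k \<le> s'" "s' \<le> m" "m \<le> l" using that less.prems by auto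
        have inner: "norm ((f \<mu> (x s') - f \<mu> (x' s')) - (f \<mu> (x m) - f \<mu> (x' m)))
            \<le> 6 * M * M * Z * Ow s' t' + 2 * M * M * Ee s' t'" if mu: "\<mu> < d" for \<mu>
        proof -
          have "norm ((f \<mu> (x s') - f \<mu> (x' s')) - (f \<mu> (x m) - f \<mu> (x' m)))
              = norm (f \<mu> (x m) - f \<mu> (x' m) - f \<mu> (x s') + f \<mu> (x' s'))"
          proof -
            have "(f \<mu> (x s') - f \<mu> (x' s')) - (f \<mu> (x m) - f \<mu> (x' m)) = - (f \<mu> (x m) - f \<mu> (x' m) - f \<mu> (x s') + f \<mu> (x' s'))"
              by (simp add: algebra_simps)
            thus ?thesis by (simp only: norm_minus_cancel)
          qed
          also have "\<dots> \<le> M * norm ((x m - x' m) - (x s' - x' s')) + M * norm (x s' - x' s') * (norm (x m - x s') + norm (x' m - x' s'))"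
            by (rule fdd[OF mu])
          also have "\<dots> = M * norm (z m - z s') + M * norm (z s') * (norm (x m - x s') + norm (x' m - x' s'))"
            by (simp add: z_def)
          also have "\<dots> \<le> M * (2 * M * Z * Ow s' t' + 2 * M * Ee s' t') + M * Z * (2 * M * Ow s' t' + 2 * M * Ow s' t')"
          proof -
            have h1: "norm (z m - z s') \<le> 2 * M * Z * Ow s' t' + 2 * M * Ee s' t'"
            proof -
              have "2 * M * Z * ob s' m powr (1 / p) \<le> 2 * M * Z * Ow s' t'"
                unfolding Ow_def using ob_mono[of s' s' m t'] tt M0 Z0 by (intro mult_left_mono) auto
              moreover have "2 * M * E s' m powr (1 / p) \<le> 2 * M * Ee s' t'"
                unfolding Ee_def using E_mono[of s' s' m t'] tt M0 by (intro mult_left_mono) auto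
              ultimately show ?thesis using IH by linarith
            qed
            have h2: "norm (z s') \<le> Z" using Zge r by auto
            have h3: "norm (x m - x s') + norm (x' m - x' s') \<le> 2 * M * Ow s' t' + 2 * M * Ow s' t'"
            proof (intro add_mono)
              have "norm (x m - x s') \<le> 2 * M * om d p w s' m powr (1 / p)" using apx r by auto
              also have "\<dots> \<le> 2 * M * Ow s' t'" unfolding Ow_def
                using M0 tt by (intro mult_left_mono order_trans[OF ow_mono w_le_ob]) auto
              finally show "norm (x m - x s') \<le> 2 * M * Ow s' t'" .
              have "norm (x' m - x' s') \<le> 2 * M * om d p w' s' m powr (1 / p)" using apx' r by auto
              also have "\<dots> \<le> 2 * M * Ow s' t'" unfolding Ow_def
                using M0 tt by (intro mult_left_mono order_trans[OF ow_mono w'_le_ob]) auto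
              finally show "norm (x' m - x' s') \<le> 2 * M * Ow s' t'" .
            qed
            have "M * norm (z m - z s') \<le> M * (2 * M * Z * Ow s' t' + 2 * M * Ee s' t')"
              using h1 M0 by (rule mult_left_mono)
            moreover have "M * norm (z s') * (norm (x m - x s') + norm (x' m - x' s')) \<le> M * Z * (2 * M * Ow s' t' + 2 * M * Ow s' t')"
              by (rule mult_mono[OF mult_left_mono[OF h2 M0] h3]) (use M0 Z0 in auto)
            ultimately show ?thesis by linarith
          qed
          also have "\<dots> = 6 * M * M * Z * Ow s' t' + 2 * M * M * Ee s' t'" by (simp add: algebra_simps)
          finally show ?thesis .
        qed
        have "norm (\<Xi>1 s' t' - \<Xi>1 s' m - \<Xi>1 m t') \<le> l1norm d (\<lambda>\<mu>. w t' \<mu> - w m \<mu>) * (6 * M * M * Z * Ow s' t' + 2 * M * M * Ee s' t')"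
          unfolding eq by (intro sum_bound inner)
        also have "\<dots> \<le> Ow s' t' * (6 * M * M * Z * Ow s' t' + 2 * M * M * Ee s' t')"
        proof (intro mult_right_mono)
          have "l1norm d (\<lambda>\<mu>. w t' \<mu> - w m \<mu>) \<le> om d p w m t' powr (1 / p)" using that p0 by (intro om_incr) auto
          also have "\<dots> \<le> Ow s' t'" unfolding Ow_def using that by (intro order_trans[OF ow_mono w_le_ob]) auto
          finally show "l1norm d (\<lambda>\<mu>. w t' \<mu> - w m \<mu>) \<le> Ow s' t'" .
        qed (use M0 Z0 Ow_nn Ee_nn in auto)
        also have "\<dots> = (6 * M * M * Z) * (Ow s' t' * Ow s' t') + (2 * M * M) * (Ow s' t' * Ee s' t')"
          by (simp add: algebra_simps)
        finally show ?thesis unfolding OO OE .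
      qed
      have delta2: "norm (\<Xi>2 s' t' - \<Xi>2 s' m - \<Xi>2 m t')
          \<le> 0 * ob s' t' powr (2 / p) + (2 * M * M) * (ob s' t' * E s' t') powr (1 / p)"
        if "s \<le> s'" "s' < m" "m < t'" "t' \<le> t" for s' m t'
      proof -
        have eq: "\<Xi>2 s' t' - \<Xi>2 s' m - \<Xi>2 m t' = (\<Sum>\<mu><d. (e t' \<mu> - e m \<mu>) *\<^sub>R (f \<mu> (x' s') - f \<mu> (x' m)))"
          unfolding \<Xi>2_def by (simp add: sum_subtractf[symmetric] algebra_simps)
        have r: "k \<le> s'" "s' \<le> m" "m \<le> l" using that less.prems by auto
        have "norm (\<Xi>2 s' t' - \<Xi>2 s' m - \<Xi>2 m t') \<le> l1norm d (\<lambda>\<mu>. e t' \<mu> - e m \<mu>) * (M * norm (x' s' - x' m))"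
          unfolding eq by (intro sum_bound flip)
        also have "\<dots> \<le> Ee s' t' * (M * (2 * M * Ow s' t'))"
        proof (intro mult_mono mult_left_mono)
          have "l1norm d (\<lambda>\<mu>. e t' \<mu> - e m \<mu>) \<le> E m t' powr (1 / p)" unfolding E_def using that p0 by (intro om_incr) auto
          also have "\<dots> \<le> Ee s' t'" unfolding Ee_def using that by (intro E_mono) auto
          finally show "l1norm d (\<lambda>\<mu>. e t' \<mu> - e m \<mu>) \<le> Ee s' t'" .
          have "norm (x' s' - x' m) \<le> 2 * M * om d p w' s' m powr (1 / p)" using apx'[of s' m] r norm_minus_commute[of "x' s'" "x' m"] by simp
          also have "\<dots> \<le> 2 * M * Ow s' t'" unfolding Ow_def
            using M0 that by (intro mult_left_mono order_trans[OF ow_mono w'_le_ob]) auto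
          finally show "norm (x' s' - x' m) \<le> 2 * M * Ow s' t'" .
        qed (use M0 Ee_nn Ow_nn in auto)
        also have "\<dots> = (2 * M * M) * (Ow s' t' * Ee s' t')" by (simp add: algebra_simps)
        finally show ?thesis unfolding OE by simp
      qed
      have R1: "norm ((\<Sum>j<t - s. \<Xi>1 (s + j) (s + Suc j)) - \<Xi>1 s t)
          \<le> 2 * ?C * ((6 * M * M * Z) * ob s t powr (2 / p) + (2 * M * M) * (ob s t * E s t) powr (1 / p))"
        by (rule sew_inst[where \<omega>A=ob and \<omega>B=E, OF ob_nn ob_sup E_nn E_sup])
          (use delta1 st less.prems lN M0 Z0 in auto)
      have R2: "norm ((\<Sum>j<t - s. \<Xi>2 (s + j) (s + Suc j)) - \<Xi>2 s t)
          \<le> 2 * ?C * (0 * ob s t powr (2 / p) + (2 * M * M) * (ob s t * E s t) powr (1 / p))"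
        by (rule sew_inst[where \<omega>A=ob and \<omega>B=E, OF ob_nn ob_sup E_nn E_sup])
          (use delta2 st less.prems lN M0 in auto)
      define P where "P = M * Ow s t"
      define Q where "Q = M * Ee s t"
      have P0: "0 \<le> P" and Q0: "0 \<le> Q" using M0 Ow_nn Ee_nn by (auto simp: P_def Q_def)
      have Pe: "P \<le> \<eta>"
      proof -
        have "P \<le> M * ob k l powr (1 / p)" unfolding P_def Ow_def
          using less.prems M0 by (intro mult_left_mono ob_mono) auto
        thus ?thesis using small by (simp add: ob_def)
      qed
      have R1': "norm ((\<Sum>j<t - s. \<Xi>1 (s + j) (s + Suc j)) - \<Xi>1 s t) \<le> 2 * ?C * (6 * Z * P * P + 2 * P * Q)"
        using R1 unfolding OO[symmetric] OE[symmetric] P_def Q_def by (simp add: algebra_simps)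
      have R2': "norm ((\<Sum>j<t - s. \<Xi>2 (s + j) (s + Suc j)) - \<Xi>2 s t) \<le> 2 * ?C * (2 * P * Q)"
        using R2 unfolding OE[symmetric] P_def Q_def by (simp add: algebra_simps)
      have X1: "norm (\<Xi>1 s t) \<le> Z * P"
      proof -
        have "norm (\<Xi>1 s t) \<le> l1norm d (\<lambda>\<mu>. w t \<mu> - w s \<mu>) * (M * Z)"
          unfolding \<Xi>1_def
        proof (intro sum_bound)
          fix \<mu> assume "\<mu> < d"
          hence "norm (f \<mu> (x s) - f \<mu> (x' s)) \<le> M * norm (z s)" using flip by (simp add: z_def)
          also have "\<dots> \<le> M * Z" using Zge less.prems M0 by (intro mult_left_mono) auto
          finally show "norm (f \<mu> (x s) - f \<mu> (x' s)) \<le> M * Z" .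
        qed
        also have "\<dots> \<le> Ow s t * (M * Z)"
          using st p0 M0 Z0 unfolding Ow_def by (intro mult_right_mono order_trans[OF om_incr w_le_ob]) auto
        finally show ?thesis by (simp add: P_def mult_ac)
      qed
      have X2: "norm (\<Xi>2 s t) \<le> Q"
      proof -
        have "norm (\<Xi>2 s t) \<le> l1norm d (\<lambda>\<mu>. e t \<mu> - e s \<mu>) * M"
          unfolding \<Xi>2_def by (intro sum_bound fb)
        also have "\<dots> \<le> Ee s t * M"
          using st p0 M0 unfolding Ee_def E_def by (intro mult_right_mono om_incr) auto
        finally show ?thesis by (simp add: Q_def mult_ac)
      qed
      have "z t - z s = \<Xi>1 s t + \<Xi>2 s t + ((\<Sum>j<t - s. \<Xi>1 (s + j) (s + Suc j)) - \<Xi>1 s t)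
          + ((\<Sum>j<t - s. \<Xi>2 (s + j) (s + Suc j)) - \<Xi>2 s t)"
        unfolding tele by simp
      hence "norm (z t - z s) = norm (\<Xi>1 s t + \<Xi>2 s t + ((\<Sum>j<t - s. \<Xi>1 (s + j) (s + Suc j)) - \<Xi>1 s t)
          + ((\<Sum>j<t - s. \<Xi>2 (s + j) (s + Suc j)) - \<Xi>2 s t))" by simp
      hence "norm (z t - z s) \<le> norm (\<Xi>1 s t) + norm (\<Xi>2 s t) + norm ((\<Sum>j<t - s. \<Xi>1 (s + j) (s + Suc j)) - \<Xi>1 s t)
          + norm ((\<Sum>j<t - s. \<Xi>2 (s + j) (s + Suc j)) - \<Xi>2 s t)"
        using norm_triangle_ineq[of "\<Xi>1 s t + \<Xi>2 s t + ((\<Sum>j<t - s. \<Xi>1 (s + j) (s + Suc j)) - \<Xi>1 s t)" "(\<Sum>j<t - s. \<Xi>2 (s + j) (s + Suc j)) - \<Xi>2 s t"]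
          norm_triangle_ineq[of "\<Xi>1 s t + \<Xi>2 s t" "(\<Sum>j<t - s. \<Xi>1 (s + j) (s + Suc j)) - \<Xi>1 s t"]
          norm_triangle_ineq[of "\<Xi>1 s t" "\<Xi>2 s t"] by linarith
      also have "\<dots> \<le> Z * P + Q + 2 * ?C * (6 * Z * P * P + 2 * P * Q) + 2 * ?C * (2 * P * Q)"
        using X1 X2 R1' R2' by linarith
      also have "\<dots> = Z * P * (1 + 12 * ?C * P) + Q * (1 + 8 * ?C * P)" by (simp add: algebra_simps)
      also have "\<dots> \<le> Z * P * 2 + Q * 2"
      proof (intro add_mono mult_left_mono)
        show "1 + 12 * ?C * P \<le> 2" using mult_left_mono[OF Pe C0] eta by linarith
        show "1 + 8 * ?C * P \<le> 2" using mult_left_mono[OF Pe C0] eta mult_nonneg_nonneg[OF C0 P0] by linarith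
      qed (use Z0 P0 Q0 in auto)
      finally show ?thesis by (simp add: P_def Q_def Ow_def Ee_def mult_ac)
    qed
  qed
  obtain m0 where m0: "m0 \<in> {k..l}" "Z = norm (z m0)"
  proof -
    have "Z \<in> (\<lambda>j. norm (z j)) ` {k..l}" unfolding Z_def using kl by (intro Max_in) auto
    thus ?thesis using that by auto
  qed
  have "Z \<le> norm (z k) + norm (z m0 - z k)"
    using m0(2) norm_triangle_ineq[of "z k" "z m0 - z k"] by simp
  also have "norm (z m0 - z k) \<le> 2 * M * Z * ob k m0 powr (1 / p) + 2 * M * E k m0 powr (1 / p)"
    using H m0 by auto
  also have "\<dots> \<le> 2 * Z * \<eta> + 2 * M * E k l powr (1 / p)"
  proof (intro add_mono)
    have "M * ob k m0 powr (1 / p) \<le> M * ob k l powr (1 / p)"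
      using m0 M0 by (intro mult_left_mono ob_mono) auto
    also have "\<dots> \<le> \<eta>" using small by (simp add: ob_def)
    finally have mo: "M * ob k m0 powr (1 / p) \<le> \<eta>" .
    have "(2 * Z) * (M * ob k m0 powr (1 / p)) \<le> (2 * Z) * \<eta>"
      using mo Z0 by (intro mult_left_mono) auto
    thus "2 * M * Z * ob k m0 powr (1 / p) \<le> 2 * Z * \<eta>" by (simp add: mult_ac)
    show "2 * M * E k m0 powr (1 / p) \<le> 2 * M * E k l powr (1 / p)"
      using m0 M0 by (intro mult_left_mono E_mono) auto
  qed
  finally have "Z \<le> norm (z k) + 2 * Z * \<eta> + 2 * M * E k l powr (1 / p)" by simp
  moreover have "2 * Z * \<eta> \<le> Z / 2" using mult_left_mono[OF eta4 Z0] by linarith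
  ultimately have "Z \<le> 2 * norm (z k) + 4 * M * E k l powr (1 / p)" by linarith
  moreover have "norm (z m) \<le> Z" using Zge mm by auto
  ultimately show ?thesis by (simp add: z_def E_def e_def)
qed

end



context euler begin

lemma crude:
  fixes x x' :: "nat \<Rightarrow> 'a" and w w' :: "nat \<Rightarrow> nat \<Rightarrow> real"
  assumes recx: "\<And>j. j < N \<Longrightarrow> x (Suc j) = x j + (\<Sum>\<mu><d. (w (Suc j) \<mu> - w j \<mu>) *\<^sub>R f \<mu> (x j))"
    and recx': "\<And>j. j < N \<Longrightarrow> x' (Suc j) = x' j + (\<Sum>\<mu><d. (w' (Suc j) \<mu> - w' j \<mu>) *\<^sub>R f \<mu> (x' j))"
    and j: "j < N"
  shows "norm (x (Suc j) - x' (Suc j)) \<le> (1 + M * l1norm d (\<lambda>\<mu>. w (Suc j) \<mu> - w j \<mu>)) * norm (x j - x' j)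
      + M * l1norm d (\<lambda>\<mu>. (w (Suc j) \<mu> - w' (Suc j) \<mu>) - (w j \<mu> - w' j \<mu>))"
proof -
  have eq: "x (Suc j) - x' (Suc j) = (x j - x' j) + (\<Sum>\<mu><d. (w (Suc j) \<mu> - w j \<mu>) *\<^sub>R (f \<mu> (x j) - f \<mu> (x' j)))
     + (\<Sum>\<mu><d. ((w (Suc j) \<mu> - w' (Suc j) \<mu>) - (w j \<mu> - w' j \<mu>)) *\<^sub>R f \<mu> (x' j))"
  proof -
    have "x (Suc j) - x' (Suc j) = (x j - x' j) + ((\<Sum>\<mu><d. (w (Suc j) \<mu> - w j \<mu>) *\<^sub>R f \<mu> (x j)) - (\<Sum>\<mu><d. (w' (Suc j) \<mu> - w' j \<mu>) *\<^sub>R f \<mu> (x' j)))"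
      using recx[OF j] recx'[OF j] by (simp add: algebra_simps)
    also have "(\<Sum>\<mu><d. (w (Suc j) \<mu> - w j \<mu>) *\<^sub>R f \<mu> (x j)) - (\<Sum>\<mu><d. (w' (Suc j) \<mu> - w' j \<mu>) *\<^sub>R f \<mu> (x' j))
        = (\<Sum>\<mu><d. (w (Suc j) \<mu> - w j \<mu>) *\<^sub>R (f \<mu> (x j) - f \<mu> (x' j)))
     + (\<Sum>\<mu><d. ((w (Suc j) \<mu> - w' (Suc j) \<mu>) - (w j \<mu> - w' j \<mu>)) *\<^sub>R f \<mu> (x' j))"
      unfolding sum_subtractf[symmetric] sum.distrib[symmetric]
      by (intro sum.cong refl) (simp add: algebra_simps)
    finally show ?thesis by (simp add: add.assoc)
  qed
  have a: "norm (\<Sum>\<mu><d. (w (Suc j) \<mu> - w j \<mu>) *\<^sub>R (f \<mu> (x j) - f \<mu> (x' j)))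
      \<le> l1norm d (\<lambda>\<mu>. w (Suc j) \<mu> - w j \<mu>) * (M * norm (x j - x' j))"
    by (intro sum_bound flip)
  have b: "norm (\<Sum>\<mu><d. ((w (Suc j) \<mu> - w' (Suc j) \<mu>) - (w j \<mu> - w' j \<mu>)) *\<^sub>R f \<mu> (x' j))
      \<le> l1norm d (\<lambda>\<mu>. (w (Suc j) \<mu> - w' (Suc j) \<mu>) - (w j \<mu> - w' j \<mu>)) * M"
    by (intro sum_bound fb)
  have "norm (x (Suc j) - x' (Suc j)) \<le> norm (x j - x' j)
      + norm (\<Sum>\<mu><d. (w (Suc j) \<mu> - w j \<mu>) *\<^sub>R (f \<mu> (x j) - f \<mu> (x' j)))
      + norm (\<Sum>\<mu><d. ((w (Suc j) \<mu> - w' (Suc j) \<mu>) - (w j \<mu> - w' j \<mu>)) *\<^sub>R f \<mu> (x' j))"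
    unfolding eq by (meson norm_triangle_le norm_triangle_ineq add_mono order_refl order_trans)
  thus ?thesis using a b by (simp add: algebra_simps)
qed

lemma key_ineq:
  fixes y V \<epsilon> :: real
  assumes y0: "0 \<le> y" and eps: "0 < \<epsilon>" and V: "\<epsilon> < V" and yV: "y \<le> V powr (1 / p)"
  shows "5 * (2 + y) \<le> exp ((ln 10 / \<epsilon> + \<epsilon> powr (1 / p - 1) / 2) * V)"
proof -
  have V0: "0 < V" using eps V by simp
  have "V powr (1 / p) = V * V powr (1 / p - 1)"
    using V0 powr_add[of V 1 "1 / p - 1"] by simp
  also have "\<dots> \<le> V * \<epsilon> powr (1 / p - 1)"
    using V0 eps V p2 by (intro mult_left_mono powr_mono2') (auto simp: field_simps)
  finally have y1: "y \<le> V * \<epsilon> powr (1 / p - 1)" using yV by linarith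
  have l10: "ln 10 \<le> ln 10 / \<epsilon> * V"
  proof -
    have "1 \<le> V / \<epsilon>" using eps V by simp
    hence "ln 10 * 1 \<le> ln 10 * (V / \<epsilon>)" by (intro mult_left_mono) auto
    thus ?thesis by simp
  qed
  have "5 * (2 + y) = 10 * (1 + y / 2)" by simp
  also have "\<dots> \<le> 10 * exp (y / 2)" by (intro mult_left_mono exp_ge_add_one_self) auto
  also have "\<dots> = exp (ln 10 + y / 2)" by (simp add: exp_add)
  also have "\<dots> \<le> exp (ln 10 / \<epsilon> * V + V * \<epsilon> powr (1 / p - 1) / 2)"
    using l10 y1 by simp
  also have "\<dots> = exp ((ln 10 / \<epsilon> + \<epsilon> powr (1 / p - 1) / 2) * V)" by (simp add: algebra_simps)
  finally show ?thesis .
qed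

lemma global:
  fixes x x' :: "nat \<Rightarrow> 'a" and w w' :: "nat \<Rightarrow> nat \<Rightarrow> real"
  assumes recx: "\<And>j. j < N \<Longrightarrow> x (Suc j) = x j + (\<Sum>\<mu><d. (w (Suc j) \<mu> - w j \<mu>) *\<^sub>R f \<mu> (x j))"
    and recx': "\<And>j. j < N \<Longrightarrow> x' (Suc j) = x' j + (\<Sum>\<mu><d. (w' (Suc j) \<mu> - w' j \<mu>) *\<^sub>R f \<mu> (x' j))"
    and etadef: "\<eta> = 1 / (12 * CpN p N + 4)"
    and gam: "\<gamma> = ln 10 / \<eta> powr p + (\<eta> powr p) powr (1 / p - 1) / 2"
    and Bdef: "B = om d p (\<lambda>k \<mu>. w k \<mu> - w' k \<mu>) 0 N powr (1 / p)"
  shows "k \<le> N \<Longrightarrow> k \<le> m \<Longrightarrow> m \<le> N \<Longrightarrow> norm (x m - x' m) + M * B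
     \<le> 5 * exp (\<gamma> * (M powr p * (om d p w k N + om d p w' k N))) * (norm (x k - x' k) + M * B)"
proof (induction "N - k" arbitrary: k m rule: less_induct)
  case less
  let ?C = "CpN p N"
  define u where "u j = norm (x j - x' j) + M * B" for j
  define ob where "ob a b = om d p w a b + om d p w' a b" for a b
  define e where "e = (\<lambda>k \<mu>. w k \<mu> - w' k \<mu>)"
  have ob_nn: "0 \<le> ob a b" for a b by (simp add: ob_def om_nn add_nonneg_nonneg)
  have B0: "0 \<le> B" by (simp add: Bdef)
  have u0: "0 \<le> u j" for j using M0 B0 by (simp add: u_def)
  have eta0: "0 < \<eta>" using C0 by (simp add: etadef)
  have eta12: "12 * ?C * \<eta> \<le> 1" using C0 by (simp add: etadef field_simps)
  have eta4: "\<eta> \<le> 1 / 4" using C0 by (simp add: etadef field_simps)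
  define \<epsilon> where "\<epsilon> = \<eta> powr p"
  have eps0: "0 < \<epsilon>" using eta0 by (simp add: \<epsilon>_def)
  have gam': "\<gamma> = ln 10 / \<epsilon> + \<epsilon> powr (1 / p - 1) / 2" by (simp add: gam \<epsilon>_def)
  have gam0: "0 \<le> \<gamma>" unfolding gam' using eps0 by (intro add_nonneg_nonneg divide_nonneg_pos) auto
  define S where "S = {l \<in> {k..N}. M * ob k l powr (1 / p) \<le> \<eta>}"
  have Sfin: "finite S" by (simp add: S_def)
  have kS: "k \<in> S" using less.prems eta0 by (simp add: S_def ob_def om_def V_def)
  define l where "l = Max S"
  have lS: "l \<in> S" unfolding l_def using Sfin kS by (intro Max_in) auto
  have kl: "k \<le> l" "l \<le> N" and lsmall: "M * ob k l powr (1 / p) \<le> \<eta>" using lS by (auto simp: S_def)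
  have EB: "om d p e a b powr (1 / p) \<le> B" if "a \<le> b" "b \<le> N" for a b
    unfolding Bdef e_def using that by (intro ow_mono) auto
  have lsm: "M * (om d p w k l + om d p w' k l) powr (1 / p) \<le> \<eta>" using lsmall by (simp add: ob_def)
  have loc: "u m' \<le> 5 * u k" if "k \<le> m'" "m' \<le> l" for m'
  proof -
    have "norm (x m' - x' m') \<le> 2 * norm (x k - x' k) + 4 * M * om d p e k l powr (1 / p)"
      unfolding e_def
      by (rule local_diff[where x=x and x'=x' and w=w and w'=w', OF recx recx' kl(2) kl(1) lsm eta12 eta4 that])
    also have "\<dots> \<le> 2 * norm (x k - x' k) + 4 * M * B"
      using EB[OF kl] M0 by (intro add_left_mono mult_left_mono) auto
    finally have "norm (x m' - x' m') \<le> 2 * norm (x k - x' k) + 4 * (M * B)" by simp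
    thus ?thesis unfolding u_def distrib_left using norm_ge_zero[of "x k - x' k"] by linarith
  qed
  define G where "G = exp (\<gamma> * (M powr p * ob k N))"
  have G1: "1 \<le> G" unfolding G_def using gam0 ob_nn by simp
  have goal: "u m \<le> 5 * G * u k"
  proof (cases "m \<le> l")
    case True
    have "u m \<le> 5 * u k" using loc[OF less.prems(2) True] .
    also have "\<dots> \<le> 5 * G * u k" using G1 u0[of k] by (simp add: mult_right_mono)
    finally show ?thesis .
  next
    case False
    hence lN: "l < N" using less.prems by simp
    have notS: "Suc l \<notin> S"
    proof
      assume "Suc l \<in> S"
      hence "Suc l \<le> l" unfolding l_def using Sfin by (simp add: Max_ge)
      thus False by simp
    qed
    hence big: "\<eta> < M * ob k (Suc l) powr (1 / p)" using kl lN by (auto simp: S_def)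
    have IH: "u m \<le> 5 * exp (\<gamma> * (M powr p * ob (Suc l) N)) * u (Suc l)"
      using less.hyps[of "Suc l" m] False less.prems lN kl by (simp add: u_def ob_def)
    define y where "y = M * l1norm d (\<lambda>\<mu>. w (Suc l) \<mu> - w l \<mu>)"
    have y0: "0 \<le> y" using M0 l1norm_nn by (simp add: y_def)
    have cr: "norm (x (Suc l) - x' (Suc l)) \<le> (1 + y) * norm (x l - x' l) + M * B"
    proof -
      have "l1norm d (\<lambda>\<mu>. (w (Suc l) \<mu> - w' (Suc l) \<mu>) - (w l \<mu> - w' l \<mu>)) \<le> om d p e l (Suc l) powr (1 / p)"
        unfolding e_def using p0 by (intro om_incr) auto
      also have "\<dots> \<le> B" using EB lN by auto
      finally have "M * l1norm d (\<lambda>\<mu>. (w (Suc l) \<mu> - w' (Suc l) \<mu>) - (w l \<mu> - w' l \<mu>)) \<le> M * B"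
        using M0 by (intro mult_left_mono)
      thus ?thesis using crude[where x=x and x'=x' and w=w and w'=w', OF recx recx' lN] by (simp add: y_def)
    qed
    have ul: "u (Suc l) \<le> (2 + y) * u l"
    proof -
      have "u (Suc l) \<le> (1 + y) * norm (x l - x' l) + 2 * (M * B)" unfolding u_def using cr by linarith
      also have "\<dots> \<le> (2 + y) * (norm (x l - x' l) + M * B)"
        using y0 M0 B0 by (simp add: algebra_simps mult_nonneg_nonneg)
      finally show ?thesis by (simp add: u_def)
    qed
    define q where "q = M * ob k (Suc l) powr (1 / p)"
    define V where "V = M powr p * ob k (Suc l)"
    have q0: "0 \<le> q" using M0 by (simp add: q_def)
    have Vq: "V = q powr p"
      unfolding V_def q_def powr_mult using ob_nn p0 by (simp add: powr_powr)
    have qV: "q = V powr (1 / p)" unfolding Vq using q0 p0 by (simp add: powr_powr)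
    have epsV: "\<epsilon> < V" unfolding Vq \<epsilon>_def using big p0 eta0 by (intro powr_less_mono2) (auto simp: q_def)
    have yq: "y \<le> q"
    proof -
      have "l1norm d (\<lambda>\<mu>. w (Suc l) \<mu> - w l \<mu>) \<le> om d p w l (Suc l) powr (1 / p)"
        using p0 by (intro om_incr) auto
      also have "\<dots> \<le> om d p w k (Suc l) powr (1 / p)" using kl by (intro ow_mono) auto
      also have "\<dots> \<le> ob k (Suc l) powr (1 / p)"
        unfolding ob_def using p0 om_nn[of d p w' k "Suc l"] by (intro powr_mono2) (auto simp: om_nn)
      finally show ?thesis unfolding y_def q_def using M0 by (intro mult_left_mono)
    qed
    have key: "5 * (2 + y) \<le> exp (\<gamma> * V)"
      using key_ineq[OF y0 eps0 epsV] yq qV unfolding gam' by (simp add: mult.commute)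
    have sup: "ob k (Suc l) + ob (Suc l) N \<le> ob k N"
      using om_super[of k "Suc l" N d p w] om_super[of k "Suc l" N d p w'] kl lN by (simp add: ob_def)
    have "u m \<le> 5 * exp (\<gamma> * (M powr p * ob (Suc l) N)) * ((2 + y) * (5 * u k))"
    proof -
      have ul5: "u (Suc l) \<le> (2 + y) * (5 * u k)"
        using ul mult_left_mono[OF loc[OF kl(1) order_refl], of "2 + y"] y0 by linarith
      have "5 * exp (\<gamma> * (M powr p * ob (Suc l) N)) * u (Suc l) \<le> 5 * exp (\<gamma> * (M powr p * ob (Suc l) N)) * ((2 + y) * (5 * u k))"
        using ul5 by (intro mult_left_mono) auto
      thus ?thesis using IH by linarith
    qed
    also have "\<dots> = 5 * exp (\<gamma> * (M powr p * ob (Suc l) N)) * (5 * (2 + y)) * u k" by (simp add: mult_ac)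
    also have "\<dots> \<le> 5 * exp (\<gamma> * (M powr p * ob (Suc l) N)) * exp (\<gamma> * V) * u k"
      using key u0[of k] by (intro mult_right_mono mult_left_mono) auto
    also have "\<dots> = 5 * (exp (\<gamma> * (M powr p * ob (Suc l) N)) * exp (\<gamma> * V)) * u k" by (simp add: mult_ac)
    also have "\<dots> \<le> 5 * G * u k"
    proof -
      have "exp (\<gamma> * (M powr p * ob (Suc l) N)) * exp (\<gamma> * V) = exp (\<gamma> * (M powr p * (ob k (Suc l) + ob (Suc l) N)))"
        by (simp add: V_def exp_add[symmetric] algebra_simps)
      also have "\<dots> \<le> G"
        unfolding G_def using sup gam0 by (intro exp_mono mult_left_mono) auto
      finally show ?thesis using u0[of k] by (intro mult_right_mono) auto
    qed
    finally show ?thesis .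
  qed
  thus ?case by (simp add: u_def G_def ob_def)
qed

end



lemma ln10_le3: "ln (10::real) \<le> 3"
proof -
  have e1: "5 / 2 \<le> exp (1::real)" using exp_lower_Taylor_quadratic[of 1] by simp
  have "exp (3::real) = exp 1 * exp 1 * exp 1" by (simp add: exp_add[symmetric])
  also have "\<dots> \<ge> 5/2 * (5/2) * (5/2)" using e1 by (intro mult_mono) auto
  finally have "10 \<le> exp (3::real)" by simp
  thus ?thesis by (metis exp_gt_zero ln_exp ln_le_cancel_iff zero_less_numeral)
qed

lemma exp2_ge5: "5 \<le> exp (2::real)"
  using exp_lower_Taylor_quadratic[of 2] by simp

lemma const_bounds:
  assumes p: "2 \<le> p"
  shows "ln 10 / (1 / (12 * CpN p N + 4)) powr p + ((1 / (12 * CpN p N + 4)) powr p) powr (1 / p - 1) / 2 \<le> cpN p N"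
    and "5 \<le> 2 * cpN' p N" and "0 \<le> cpN p N"
proof -
  define C where "C = CpN p N"
  have C0: "0 \<le> C" unfolding C_def CpN_def zetaN_def by (intro mult_nonneg_nonneg sum_nonneg) auto
  define Y where "Y = 12 * C + 4"
  have Y1: "1 \<le> Y" using C0 by (simp add: Y_def)
  have p0: "0 < p" using p by simp
  define X where "X = Lp p N + (Kp p N)\<^sup>2 + Kp' p N"
  have Kp9: "9 \<le> Kp p N"
  proof -
    have "1 \<le> 2 powr (6 * (1 - 1 / p))" using p by (intro ge_one_powr_ge_zero) (auto simp: field_simps)
    moreover have "1 \<le> max 1 (6 powr (1 - 1/p) * 8 powr ((1 - 1/p) * (1 - 2/p)) * CpN p N powr (1 - 1/p))" by simp
    ultimately have "1 * 1 \<le> 2 powr (6 * (1 - 1 / p)) * max 1 (6 powr (1 - 1/p) * 8 powr ((1 - 1/p) * (1 - 2/p)) * CpN p N powr (1 - 1/p))"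
      by (intro mult_mono) auto
    thus ?thesis unfolding Kp_def by simp
  qed
  have Kp2: "81 \<le> (Kp p N)\<^sup>2"
  proof -
    have "9 * 9 \<le> Kp p N * Kp p N" using Kp9 by (intro mult_mono) auto
    thus ?thesis by (simp add: power2_eq_square)
  qed
  have Kp'0: "0 \<le> Kp' p N" unfolding Kp'_def by (intro mult_nonneg_nonneg) auto
  have Lp: "4.4 * C \<le> Lp p N"
  proof -
    have a: "2 \<le> 4 powr (3/2 - 2/p)"
    proof -
      have "4 powr (1/2) \<le> 4 powr (3/2 - 2/p)" using p by (intro powr_mono) (auto simp: field_simps)
      moreover have "4 powr (1/2) = (2::real)" by (simp add: powr_half_sqrt)
      ultimately show ?thesis by simp
    qed
    have b: "2.2 \<le> 7 powr (2 - 3/p)"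
    proof -
      have "7 powr (1/2) \<le> 7 powr (2 - 3/p)" using p by (intro powr_mono) (auto simp: field_simps)
      moreover have "7 powr (1/2) = sqrt (7::real)" by (simp add: powr_half_sqrt)
      moreover have "2.2 \<le> sqrt (7::real)" by (rule real_le_rsqrt) (simp add: power2_eq_square)
      ultimately show ?thesis by simp
    qed
    have "2 * 2.2 \<le> 4 powr (3/2 - 2/p) * 7 powr (2 - 3/p)" using a b by (intro mult_mono) auto
    hence "(2 * 2.2) * C \<le> (4 powr (3/2 - 2/p) * 7 powr (2 - 3/p)) * C" using C0 by (intro mult_right_mono)
    thus ?thesis unfolding Lp_def C_def by simp
  qed
  have X: "4.4 * C + 81 \<le> X" using Lp Kp2 Kp'0 by (simp add: X_def)
  have X0: "0 \<le> X" using X C0 by linarith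
  have cpN: "cpN p N = (2 * exp 2 * X) powr p"
  proof -
    have "exp (2 * p) = exp 2 powr p" by (simp add: powr_def)
    thus ?thesis unfolding cpN_def X_def by (simp add: powr_mult)
  qed
  have c0: "0 \<le> cpN p N" unfolding cpN by simp
  thus "0 \<le> cpN p N" .
  have YX: "3.5 * Y \<le> 2 * exp 2 * X"
  proof -
    have "5 * X \<le> exp 2 * X" by (rule mult_right_mono[OF exp2_ge5 X0])
    moreover have "3.5 * Y \<le> 10 * X" using X C0 by (simp add: Y_def)
    moreover have "2 * exp 2 * X = 2 * (exp 2 * X)" by simp
    ultimately show ?thesis by linarith
  qed
  have eta: "1 / (12 * CpN p N + 4) = 1 / Y" by (simp add: Y_def C_def)
  have t1: "ln 10 / (1 / Y) powr p = ln 10 * Y powr p" using Y1 by (simp add: powr_divide)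
  have t2: "((1 / Y) powr p) powr (1 / p - 1) = Y powr (p - 1)"
  proof -
    have "((1 / Y) powr p) powr (1 / p - 1) = (1 / Y) powr (p * (1 / p - 1))" by (simp add: powr_powr)
    also have "p * (1 / p - 1) = 1 - p" using p0 by (simp add: field_simps)
    also have "(1 / Y) powr (1 - p) = Y powr (p - 1)" using Y1
      by (simp add: powr_divide powr_minus_divide[symmetric])
    finally show ?thesis .
  qed
  have t3: "Y powr (p - 1) \<le> Y powr p" using Y1 by (intro powr_mono) auto
  have "ln 10 / (1 / (12 * CpN p N + 4)) powr p + ((1 / (12 * CpN p N + 4)) powr p) powr (1 / p - 1) / 2
      = ln 10 * Y powr p + Y powr (p - 1) / 2" unfolding eta t1 t2 ..
  also have "\<dots> \<le> 3 * Y powr p + Y powr p / 2"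
    using ln10_le3 t3 by (intro add_mono mult_right_mono) auto
  also have "\<dots> = 3.5 * Y powr p" by simp
  also have "\<dots> \<le> 3.5 powr p * Y powr p"
  proof -
    have "(3.5::real) powr 1 \<le> 3.5 powr p" using p by (intro powr_mono) auto
    thus ?thesis by (intro mult_right_mono) auto
  qed
  also have "\<dots> = (3.5 * Y) powr p" by (rule powr_mult[symmetric])
  also have "\<dots> \<le> (2 * exp 2 * X) powr p" using YX Y1 p0 by (intro powr_mono2) auto
  finally show "ln 10 / (1 / (12 * CpN p N + 4)) powr p + ((1 / (12 * CpN p N + 4)) powr p) powr (1 / p - 1) / 2 \<le> cpN p N"
    unfolding cpN .
  have "cpN p N powr (1 / p) = 2 * exp 2 * X" unfolding cpN using X0 p0 by (simp add: powr_powr)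
  moreover have "1 \<le> 2 powr (1 - 2 / p)" using p by (intro ge_one_powr_ge_zero) (auto simp: field_simps)
  ultimately have "1 * (2 * exp 2 * X) \<le> cpN' p N" unfolding cpN'_def using X0
    by (metis mult_right_mono exp_ge_zero mult_nonneg_nonneg zero_le_numeral)
  moreover have "5 \<le> 2 * (2 * exp 2 * X)"
  proof -
    have "5 * X \<le> exp 2 * X" by (rule mult_right_mono[OF exp2_ge5 X0])
    moreover have "2 * (2 * exp 2 * X) = 4 * (exp 2 * X)" by simp
    ultimately show ?thesis using X C0 by linarith
  qed
  ultimately show "5 \<le> 2 * cpN' p N" by linarith
qed



lemma C3b_le:
  assumes "\<mu> < d"
  shows "(SUP x. norm (f \<mu> x)) \<le> C3b_norm d f Da Db Dc"
    and "(SUP x. norm (Da \<mu> x)) \<le> C3b_norm d f Da Db Dc"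
    and "(SUP x. norm (Db \<mu> x)) \<le> C3b_norm d f Da Db Dc"
proof -
  let ?m = "\<lambda>\<mu>. Max {(SUP x. norm (f \<mu> x)), (SUP x. norm (Da \<mu> x)), (SUP x. norm (Db \<mu> x)), (SUP x. norm (Dc \<mu> x))}"
  have "?m \<mu> \<le> C3b_norm d f Da Db Dc" unfolding C3b_norm_def using assms by (intro Max_ge) auto
  moreover have "(SUP x. norm (f \<mu> x)) \<le> ?m \<mu>" "(SUP x. norm (Da \<mu> x)) \<le> ?m \<mu>" "(SUP x. norm (Db \<mu> x)) \<le> ?m \<mu>"
    by (intro Max_ge; simp)+
  ultimately show "(SUP x. norm (f \<mu> x)) \<le> C3b_norm d f Da Db Dc"
    "(SUP x. norm (Da \<mu> x)) \<le> C3b_norm d f Da Db Dc" "(SUP x. norm (Db \<mu> x)) \<le> C3b_norm d f Da Db Dc"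
    by linarith+
qed

lemma ts_pvar_om: "ts_pvar d p w 0 N = om d p w 0 N powr (1 / p)"
  by (simp add: ts_pvar_def pvar_V om_def)

lemma arr_pvar_nn: "0 \<le> arr_pvar d q X k l"
  by (simp add: arr_pvar_def pvar_V)

lemma om_le_rp:
  assumes "0 < p"
  shows "om d p w 0 N \<le> rp_norm d p w 0 N powr p"
proof -
  have a: "om d p w 0 N powr (1 / p) \<le> rp_norm d p w 0 N"
    unfolding rp_norm_def ts_pvar_om using arr_pvar_nn by simp
  have "om d p w 0 N = (om d p w 0 N powr (1 / p)) powr p"
    using assms om_nn[of d p w 0 N] by (simp add: powr_powr)
  also have "\<dots> \<le> rp_norm d p w 0 N powr p" using a assms by (intro powr_mono2) auto
  finally show ?thesis .
qed

theorem theorem5p10: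
  fixes p :: real and N d :: nat
    and f :: "nat \<Rightarrow> 'a::real_normed_vector \<Rightarrow> 'a"
    and D1 :: "nat \<Rightarrow> 'a \<Rightarrow> 'a \<Rightarrow>\<^sub>L 'a"
    and D2 :: "nat \<Rightarrow> 'a \<Rightarrow> 'a \<Rightarrow>\<^sub>L ('a \<Rightarrow>\<^sub>L 'a)"
    and D3 :: "nat \<Rightarrow> 'a \<Rightarrow> 'a \<Rightarrow>\<^sub>L ('a \<Rightarrow>\<^sub>L ('a \<Rightarrow>\<^sub>L 'a))"
    and w w' :: "nat \<Rightarrow> nat \<Rightarrow> real"
    and \<xi> \<xi>' :: 'a
    and x x' :: "nat \<Rightarrow> 'a"
  assumes p: "2 \<le> p" "p < 3"
    and d: "1 \<le> d"
    and findim: "\<exists>B. finite B \<and> span B = (UNIV :: 'a set)"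
    and nontriv: "\<exists>v::'a. v \<noteq> 0"
    and f: "\<And>\<mu>. \<mu> < d \<Longrightarrow> C3b_with (f \<mu>) (D1 \<mu>) (D2 \<mu>) (D3 \<mu>)"
    and x0: "x 0 = \<xi>"
    and xstep: "\<And>k. k < N \<Longrightarrow> x (Suc k) = x k + (\<Sum>\<mu><d. (w (Suc k) \<mu> - w k \<mu>) *\<^sub>R f \<mu> (x k))"
    and x'0: "x' 0 = \<xi>'"
    and x'step: "\<And>k. k < N \<Longrightarrow> x' (Suc k) = x' k + (\<Sum>\<mu><d. (w' (Suc k) \<mu> - w' k \<mu>) *\<^sub>R f \<mu> (x' k))"
  shows "\<forall>k\<le>N. norm (x k - x' k) \<le>
     2 * cpN' p N * exp (cpN p N * (C3b_norm d f D1 D2 D3) powr p *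
        ((rp_norm d p w 0 N) powr p + (rp_norm d p w' 0 N) powr p))
     * (norm (\<xi> - \<xi>') + C3b_norm d f D1 D2 D3 * rho_p d p N w w')"
proof (intro allI impI)
  fix k assume kN: "k \<le> N"
  define M where "M = C3b_norm d f D1 D2 D3"
  have fb: "norm (f \<mu> y) \<le> M" if "\<mu> < d" for \<mu> y
    using c_g[OF f[OF that], of y] C3b_le(1)[OF that, where f=f and Da=D1 and Db=D2 and Dc=D3] by (simp add: M_def)
  have "norm (f 0 \<xi>) \<le> M" using fb[of 0 \<xi>] d by simp
  hence M0: "0 \<le> M" by (rule order_trans[OF norm_ge_zero])
  have flip: "norm (f \<mu> y - f \<mu> y') \<le> M * norm (y - y')" if "\<mu> < d" for \<mu> y y'
    using order_trans[OF c_lip[OF f[OF that], of y y'] mult_right_mono[OF C3b_le(2)[OF that, where f=f and Da=D1 and Db=D2 and Dc=D3] norm_ge_zero]]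
    by (simp add: M_def)
  have fdd: "norm (f \<mu> a1 - f \<mu> b1 - f \<mu> a0 + f \<mu> b0)
        \<le> M * norm ((a1 - b1) - (a0 - b0)) + M * norm (a0 - b0) * (norm (a1 - a0) + norm (b1 - b0))"
    if "\<mu> < d" for \<mu> a1 b1 a0 b0
  proof -
    have s1: "(SUP x. norm (D1 \<mu> x)) \<le> M" and s2: "(SUP x. norm (D2 \<mu> x)) \<le> M"
      using C3b_le(2,3)[OF that, where f=f and Da=D1 and Db=D2 and Dc=D3] by (auto simp: M_def)
    have "(SUP x. norm (D1 \<mu> x)) * norm ((a1 - b1) - (a0 - b0)) \<le> M * norm ((a1 - b1) - (a0 - b0))"
      using s1 by (intro mult_right_mono) auto
    moreover have "(SUP x. norm (D2 \<mu> x)) * norm (a0 - b0) * (norm (a1 - a0) + norm (b1 - b0))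
        \<le> M * norm (a0 - b0) * (norm (a1 - a0) + norm (b1 - b0))"
      using s2 by (intro mult_right_mono) auto
    ultimately show ?thesis using c_dd[OF f[OF that], of a1 b1 a0 b0] by linarith
  qed
  interpret E: euler d f M p N
    by (intro euler.intro M0 p(1) fb flip fdd)
  define C where "C = CpN p N"
  define \<eta> where "\<eta> = 1 / (12 * C + 4)"
  define \<gamma> where "\<gamma> = ln 10 / \<eta> powr p + (\<eta> powr p) powr (1 / p - 1) / 2"
  define B where "B = om d p (\<lambda>k \<mu>. w k \<mu> - w' k \<mu>) 0 N powr (1 / p)"
  define R where "R = rp_norm d p w 0 N"
  define R' where "R' = rp_norm d p w' 0 N"
  define \<rho> where "\<rho> = rho_p d p N w w'"
  define c where "c = cpN p N"
  define c' where "c' = cpN' p N"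
  have p0: "0 < p" using p by simp
  have G: "norm (x k - x' k) + M * B \<le> 5 * exp (\<gamma> * (M powr p * (om d p w 0 N + om d p w' 0 N))) * (norm (x 0 - x' 0) + M * B)"
    by (rule E.global[OF xstep x'step _ _ B_def]) (use kN in \<open>auto simp: \<eta>_def \<gamma>_def C_def\<close>)
  have gc: "\<gamma> \<le> c" using const_bounds(1)[OF p(1), of N] by (simp add: \<gamma>_def \<eta>_def C_def c_def)
  have c0: "0 \<le> c" using const_bounds(3)[OF p(1), of N] by (simp add: c_def)
  have c5: "5 \<le> 2 * c'" using const_bounds(2)[OF p(1), of N] by (simp add: c'_def)
  have B0: "0 \<le> B" by (simp add: B_def)
  have Brho: "B \<le> \<rho>"
  proof -
    have "\<rho> = B + arr_pvar d (p / 2) (\<lambda>k l \<mu> \<nu>. lift w k l \<mu> \<nu> - lift w' k l \<mu> \<nu>) 0 N"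
      unfolding \<rho>_def rho_p_def B_def ts_pvar_om ..
    thus ?thesis using arr_pvar_nn[of d "p / 2" "\<lambda>k l \<mu> \<nu>. lift w k l \<mu> \<nu> - lift w' k l \<mu> \<nu>" 0 N] by linarith
  qed
  have v0: "0 \<le> M powr p * (om d p w 0 N + om d p w' 0 N)" by (simp add: om_nn add_nonneg_nonneg)
  have vR: "M powr p * (om d p w 0 N + om d p w' 0 N) \<le> M powr p * (R powr p + R' powr p)"
    using om_le_rp[OF p0, of d w N] om_le_rp[OF p0, of d w' N] by (intro mult_left_mono) (auto simp: R_def R'_def)
  have "\<gamma> * (M powr p * (om d p w 0 N + om d p w' 0 N)) \<le> c * (M powr p * (om d p w 0 N + om d p w' 0 N))"
    using gc v0 by (rule mult_right_mono)
  also have "\<dots> \<le> c * (M powr p * (R powr p + R' powr p))" using vR c0 by (rule mult_left_mono)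
  finally have ex: "exp (\<gamma> * (M powr p * (om d p w 0 N + om d p w' 0 N))) \<le> exp (c * M powr p * (R powr p + R' powr p))"
    by (simp add: mult.assoc)
  have "norm (x k - x' k) \<le> norm (x k - x' k) + M * B" using M0 B0 by simp
  also have "\<dots> \<le> 5 * exp (\<gamma> * (M powr p * (om d p w 0 N + om d p w' 0 N))) * (norm (\<xi> - \<xi>') + M * B)"
    using G x0 x'0 by simp
  also have "\<dots> \<le> 2 * c' * exp (c * M powr p * (R powr p + R' powr p)) * (norm (\<xi> - \<xi>') + M * \<rho>)"
  proof -
    have m1: "norm (\<xi> - \<xi>') + M * B \<le> norm (\<xi> - \<xi>') + M * \<rho>"
      using mult_left_mono[OF Brho M0] by linarith
    have m2: "5 * exp (\<gamma> * (M powr p * (om d p w 0 N + om d p w' 0 N))) \<le> 2 * c' * exp (c * M powr p * (R powr p + R' powr p))"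
      by (rule mult_mono[OF c5 ex]) (use c5 in auto)
    show ?thesis by (rule mult_mono[OF m2 m1]) (use c5 M0 B0 in auto)
  qed
  finally show "norm (x k - x' k) \<le> 2 * cpN' p N * exp (cpN p N * (C3b_norm d f D1 D2 D3) powr p *
        ((rp_norm d p w 0 N) powr p + (rp_norm d p w' 0 N) powr p))
     * (norm (\<xi> - \<xi>') + C3b_norm d f D1 D2 D3 * rho_p d p N w w')"
    by (simp add: M_def R_def R'_def \<rho>_def c_def c'_def)
qed


end
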